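(* Let $p$ be a prime, let $A$ be a set with $|A|=p^2$, and let $f:A\to A$ be a bijection. Then there exists a binary operation $*$ on $A$ such that $(A,* )$ is an abelian group and $f$ is an automorphism of $(A,* )$ if and only if $f$ is the identity map or the multiset of cycle lengths of $f$ is one of the following: (a) $\frac{p^2-1}{d}$ cycles of length $d$ together with one cycle of length $1$, for some positive divisor $d$ of $p^2-1$; (b) $\frac{p-1}{d}$ cycles of length $pd$, $\frac{p-1}{d}$ cycles of length $d$, and one cycle of length $1$, for some positive divisor $d$ of $p-1$; (c) $\frac{(p-1)^2}{\mathrm{lcm}(d_1,d_2)}$ cycles of length $\mathrm{lcm}(d_1,d_2)$, $\frac{p-1}{d_1}$ cycles of length $d_1$, $\frac{p-1}{d_2}$ cycles of length $d_2$, and one cycle of length $1$, for some positive divisors $d_1,d_2$ of $p-1$ (cycles listed with equal lengths being counted together). (Equivalently: the cycle structures realised by automorphisms of any abelian group of order $p^2$ are exactly those realised by automorphisms of $\mathbb{Z}_p\times\mathbb{Z}_p$.)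
   Context: For a bijection $f$ of a finite set, a cycle is a sequence $a_1,\dots,a_m$ of distinct elements with $f(a_j)=a_{j+1}$ for $j<m$ and $f(a_m)=a_1$; its length is $m$; every element lies in exactly one cycle, and fixed points are cycles of length $1$. *)

theory Defs
  imports "HOL-Algebra.Algebra" "HOL-Library.Multiset"
begin

text \<open>The cycle of f through x: the set of all iterates of x under f.
  For a bijection of a finite set this is exactly the (underlying set of the) cycle containing x.\<close>
definition cyc_orbit :: "('a \<Rightarrow> 'a) \<Rightarrow> 'a \<Rightarrow> 'a set" where
  "cyc_orbit f x = {(f ^^ n) x | n. True}"

definition cycle_type :: "('a \<Rightarrow> 'a) \<Rightarrow> 'a set \<Rightarrow> nat multiset" where
  "cycle_type f A = image_mset card (mset_set (cyc_orbit f ` A))"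

end

theory Submission
  imports Defs "HOL-Number_Theory.Number_Theory"
begin

locale permon =
  fixes f :: "'a \<Rightarrow> 'a" and P :: "'a set"
  assumes fin: "finite P" and closed: "f ` P \<subseteq> P" and inj: "inj_on f P"
begin

lemma funpow_in: "x \<in> P \<Longrightarrow> (f ^^ n) x \<in> P"
  by (induction n) (use closed in auto)

lemma inj_funpow: "inj_on (f ^^ n) P"
proof (induction n)
  case 0 then show ?case by simp
next
  case (Suc n)
  show ?case unfolding funpow_Suc_right
    by (rule comp_inj_on[OF inj]) (use Suc closed in \<open>auto intro: inj_on_subset\<close>)
qed

lemma funpow_cancel:
  assumes x: "x \<in> P" and ij: "i < j" and eq: "(f ^^ i) x = (f ^^ j) x"
  shows "(f ^^ (j - i)) x = x"
proof -
  have j: "j = i + (j - i)" using ij by simp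
  have "(f ^^ j) x = (f ^^ i) ((f ^^ (j - i)) x)"
    by (subst j, subst funpow_add) simp
  then have "(f ^^ i) ((f ^^ (j - i)) x) = (f ^^ i) x" using eq by simp
  moreover have "(f ^^ (j - i)) x \<in> P" by (rule funpow_in[OF x])
  ultimately show ?thesis using inj_funpow[of i] x unfolding inj_on_def by blast
qed

lemma exists_period:
  assumes x: "x \<in> P" shows "\<exists>n>0. (f ^^ n) x = x"
proof -
  have "\<not> inj_on (\<lambda>k. (f ^^ k) x) {..card P}"
  proof
    assume "inj_on (\<lambda>k. (f ^^ k) x) {..card P}"
    then have "card ((\<lambda>k. (f ^^ k) x) ` {..card P}) = Suc (card P)" by (simp add: card_image)
    moreover have "(\<lambda>k. (f ^^ k) x) ` {..card P} \<subseteq> P" using funpow_in x by auto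
    then have "card ((\<lambda>k. (f ^^ k) x) ` {..card P}) \<le> card P" by (rule card_mono[OF fin])
    ultimately show False by simp
  qed
  then obtain i j where ij: "i \<noteq> j" "(f ^^ i) x = (f ^^ j) x"
    unfolding inj_on_def by blast
  show ?thesis
  proof (cases "i < j")
    case True then show ?thesis using funpow_cancel[OF x True ij(2)] by (intro exI[of _ "j - i"]) simp
  next
    case False then have "j < i" using ij by simp
    then show ?thesis using funpow_cancel[OF x \<open>j < i\<close> ij(2)[symmetric]] by (intro exI[of _ "i - j"]) simp
  qed
qed

definition per :: "'a \<Rightarrow> nat" where "per x = (LEAST n. 0 < n \<and> (f ^^ n) x = x)"

lemma per: assumes "x \<in> P" shows "0 < per x" "(f ^^ per x) x = x"
  using LeastI_ex[OF exists_period[OF assms]] unfolding per_def by auto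

lemma per_least: "0 < n \<Longrightarrow> n < per x \<Longrightarrow> (f ^^ n) x \<noteq> x"
  unfolding per_def using not_less_Least by blast

lemma funpow_mult_per: assumes "x \<in> P" shows "(f ^^ (per x * q)) x = x"
proof (induction q)
  case (Suc q)
  have "(f ^^ (per x * Suc q)) x = (f ^^ per x) ((f ^^ (per x * q)) x)"
    by (simp add: funpow_add)
  then show ?case using Suc per[OF assms] by simp
qed simp

lemma funpow_mod: assumes "x \<in> P" shows "(f ^^ n) x = (f ^^ (n mod per x)) x"
proof -
  have "(f ^^ n) x = (f ^^ (n mod per x)) ((f ^^ (per x * (n div per x))) x)"
    by (metis funpow_add o_apply mod_mult_div_eq add.commute)
  then show ?thesis using funpow_mult_per[OF assms] by simp
qed

lemma per_dvd: assumes "x \<in> P" shows "(f ^^ n) x = x \<longleftrightarrow> per x dvd n"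
proof
  assume "(f ^^ n) x = x"
  then have "(f ^^ (n mod per x)) x = x" using funpow_mod[OF assms, of n] by metis
  then have "n mod per x = 0" using per_least[of "n mod per x" x] per[OF assms]
    by (meson mod_less_divisor neq0_conv)
  then show "per x dvd n" by auto
next
  assume "per x dvd n" then show "(f ^^ n) x = x"
    using funpow_mult_per[OF assms] by auto
qed

lemma orbit_eq: assumes "x \<in> P"
  shows "cyc_orbit f x = (\<lambda>k. (f ^^ k) x) ` {..<per x}"
proof -
  have "(f ^^ n) x \<in> (\<lambda>k. (f ^^ k) x) ` {..<per x}" for n
    using funpow_mod[OF assms, of n] per[OF assms] by (intro image_eqI[of _ _ "n mod per x"]) auto
  then show ?thesis unfolding cyc_orbit_def by auto
qed

lemma inj_orbit: assumes x: "x \<in> P"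
  shows "inj_on (\<lambda>k. (f ^^ k) x) {..<per x}"
proof -
  { fix i j assume ij: "i < j" "j < per x" "(f ^^ i) x = (f ^^ j) x"
    then have "(f ^^ (j - i)) x = x" using funpow_cancel x by blast
    then have False using per_least[of "j - i" x] ij by auto }
  then show ?thesis unfolding inj_on_def by (metis lessThan_iff linorder_neqE_nat)
qed

lemma bij_orbit: "x \<in> P \<Longrightarrow> bij_betw (\<lambda>k. (f ^^ k) x) {..<per x} (cyc_orbit f x)"
  using inj_orbit orbit_eq by (simp add: bij_betw_def)

lemma card_orbit: "x \<in> P \<Longrightarrow> card (cyc_orbit f x) = per x"
  using bij_orbit bij_betw_same_card by fastforce

lemma orbit_dvd: "x \<in> P \<Longrightarrow> (f ^^ n) x = x \<longleftrightarrow> card (cyc_orbit f x) dvd n"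
  using card_orbit per_dvd by simp

lemma card_orbit_eqI:
  assumes "x \<in> P" "\<And>n. (f ^^ n) x = x \<longleftrightarrow> d dvd n" shows "card (cyc_orbit f x) = d"
  using assms orbit_dvd by (meson dvd_antisym dvd_refl)

lemma orbit_subset: "x \<in> P \<Longrightarrow> cyc_orbit f x \<subseteq> P"
  unfolding cyc_orbit_def using funpow_in by auto

lemma self_in_orbit: "x \<in> cyc_orbit f x"
  unfolding cyc_orbit_def by (auto intro: exI[of _ 0])

lemma orbit_same: assumes x: "x \<in> P" and y: "y \<in> cyc_orbit f x"
  shows "cyc_orbit f y = cyc_orbit f x"
proof -
  obtain k where k: "y = (f ^^ k) x" using y unfolding cyc_orbit_def by auto
  have 1: "(f ^^ j) y = (f ^^ (j + k)) x" for j using k by (simp add: funpow_add)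
  have "(f ^^ (per x - k mod per x)) y = x"
  proof -
    have "(per x - k mod per x + k) mod per x = 0"
      using per[OF x] by (metis add.commute mod_add_right_eq mod_le_divisor le_add_diff_inverse mod_self)
    then show ?thesis using 1[of "per x - k mod per x"] funpow_mod[OF x, of "per x - k mod per x + k"] by simp
  qed
  then have "(f ^^ i) x = (f ^^ (i + (per x - k mod per x))) y" for i
    by (simp add: funpow_add)
  then show ?thesis unfolding cyc_orbit_def using 1 by blast
qed

lemma f_in_orbit: "f x \<in> cyc_orbit f x"
  unfolding cyc_orbit_def by (rule CollectI, rule exI[of _ "Suc 0"]) simp

lemma orbit_f: "x \<in> P \<Longrightarrow> cyc_orbit f (f x) = cyc_orbit f x"
  using orbit_same[of x "f x"] f_in_orbit by blast

lemma orbit_disj: "x \<in> P \<Longrightarrow> y \<in> P \<Longrightarrow> cyc_orbit f x \<noteq> cyc_orbit f y \<Longrightarrow> cyc_orbit f x \<inter> cyc_orbit f y = {}"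
  using orbit_same by blast

lemma ct_uniform:
  assumes L: "\<And>x. x \<in> P \<Longrightarrow> card (cyc_orbit f x) = L"
  shows "cycle_type f P = replicate_mset (card P div L) L \<and> L dvd card P"
proof -
  let ?S = "cyc_orbit f ` P"
  have finS: "finite ?S" using fin by simp
  have U: "\<Union> ?S = P" using orbit_subset self_in_orbit by blast
  have LS: "\<And>Q. Q \<in> ?S \<Longrightarrow> card Q = L" using L by blast
  have fQ: "\<And>Q. Q \<in> ?S \<Longrightarrow> finite Q" using orbit_subset fin finite_subset by blast
  have dj: "pairwise disjnt ?S" unfolding pairwise_def disjnt_def using orbit_disj by blast
  have "card (\<Union> ?S) = (\<Sum>Q\<in>?S. card Q)"
    by (rule card_Union_disjoint[OF dj fQ])
  also have "\<dots> = (\<Sum>Q\<in>?S. L)" by (rule sum.cong[OF refl LS])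
  also have "\<dots> = card ?S * L" by simp
  finally have cP: "card P = card ?S * L" unfolding U .
  have "cycle_type f P = image_mset (\<lambda>_. L) (mset_set ?S)"
    unfolding cycle_type_def by (rule image_mset_cong) (use LS finS in simp)
  also have "\<dots> = replicate_mset (card ?S) L" by (simp add: image_mset_const_eq)
  finally have ct: "cycle_type f P = replicate_mset (card ?S) L" .
  show ?thesis
  proof (cases "P = {}")
    case True then show ?thesis using ct by simp
  next
    case False
    then obtain x where "x \<in> P" by auto
    then have "L > 0" using L card_orbit per by fastforce
    then show ?thesis using ct cP by simp
  qed
qed

lemma closed_diff_orbit: assumes x: "x \<in> P"
  shows "f ` (P - cyc_orbit f x) \<subseteq> P - cyc_orbit f x"
proof
  fix z assume "z \<in> f ` (P - cyc_orbit f x)"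
  then obtain y where y: "y \<in> P" "y \<notin> cyc_orbit f x" "z = f y" by auto
  have "f y \<notin> cyc_orbit f x"
  proof
    assume "f y \<in> cyc_orbit f x"
    then have "cyc_orbit f (f y) = cyc_orbit f x" using orbit_same x by blast
    then show False using orbit_f[OF y(1)] self_in_orbit[of y] y(2) by auto
  qed
  then show "z \<in> P - cyc_orbit f x" using y closed by auto
qed

end

lemma ct_union:
  assumes "finite A" "finite B" "A \<inter> B = {}" "f ` A \<subseteq> A" "f ` B \<subseteq> B"
  shows "cycle_type f (A \<union> B) = cycle_type f A + cycle_type f B"
proof -
  have sub: "cyc_orbit f x \<subseteq> C" if "x \<in> C" "f ` C \<subseteq> C" for x C
  proof -
    have "(f ^^ n) x \<in> C" for n by (induction n) (use that in auto)
    then show ?thesis unfolding cyc_orbit_def by auto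
  qed
  have d: "cyc_orbit f ` A \<inter> cyc_orbit f ` B = {}"
  proof (rule ccontr)
    assume "cyc_orbit f ` A \<inter> cyc_orbit f ` B \<noteq> {}"
    then obtain x y where "x \<in> A" "y \<in> B" "cyc_orbit f x = cyc_orbit f y" by auto
    moreover have "x \<in> cyc_orbit f x" unfolding cyc_orbit_def by (rule CollectI, rule exI[of _ 0]) simp
    ultimately have "x \<in> B" using sub[of y B] assms by blast
    then show False using \<open>x \<in> A\<close> assms by auto
  qed
  show ?thesis unfolding cycle_type_def image_Un
    using d assms by (simp add: mset_set_Union)
qed

lemma permon_orbit_ct:
  assumes pf: "permon f A" and x: "x \<in> A"
  shows "cycle_type f A = cycle_type f (A - cyc_orbit f x) + {#card (cyc_orbit f x)#}"
    and "permon f (A - cyc_orbit f x)"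
proof -
  interpret F: permon f A by (rule pf)
  let ?O = "cyc_orbit f x"
  have OA: "?O \<subseteq> A" using F.orbit_subset x .
  have fO: "f ` ?O \<subseteq> ?O" using F.orbit_same F.orbit_f OA F.self_in_orbit by blast
  have "cycle_type f A = cycle_type f ((A - ?O) \<union> ?O)" using OA by (simp add: Un_absorb2)
  also have "\<dots> = cycle_type f (A - ?O) + cycle_type f ?O"
    by (rule ct_union) (use F.fin F.closed_diff_orbit[OF x] fO OA in \<open>auto intro: finite_subset\<close>)
  also have "cycle_type f ?O = {#card ?O#}"
  proof -
    have "cyc_orbit f ` ?O = {?O}" using F.orbit_same[OF x] F.self_in_orbit by blast
    then show ?thesis unfolding cycle_type_def by simp
  qed
  finally show "cycle_type f A = cycle_type f (A - ?O) + {#card ?O#}" .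
  show "permon f (A - ?O)"
    using F.fin F.closed_diff_orbit[OF x] F.inj by unfold_locales (auto intro: inj_on_subset)
qed

lemma ct_empty: "finite A \<Longrightarrow> cycle_type f A = {#} \<longleftrightarrow> A = {}"
  unfolding cycle_type_def by (auto simp: mset_set_empty_iff)

lemma conj_exists:
  assumes "permon f A" "permon g B" "cycle_type f A = cycle_type g B"
  shows "\<exists>\<phi>. bij_betw \<phi> A B \<and> (\<forall>x\<in>A. \<phi> (f x) = g (\<phi> x))"
  using assms
proof (induction "card A" arbitrary: A B rule: less_induct)
  case less
  interpret F: permon f A by (rule less.prems(1))
  interpret G: permon g B by (rule less.prems(2))
  show ?case
  proof (cases "A = {}")
    case True
    then have "cycle_type g B = {#}" using less.prems(3) by (simp add: cycle_type_def)
    then have "B = {}" using ct_empty G.fin by blast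
    then have "bij_betw (\<lambda>_. undefined) A B" using True by (simp add: bij_betw_def)
    then show ?thesis using True by blast
  next
    case False
    then obtain x where x: "x \<in> A" by auto
    let ?O = "cyc_orbit f x"
    define L where "L = card ?O"
    have "L \<in># cycle_type f A" unfolding cycle_type_def L_def using x F.fin by auto
    then have "L \<in># cycle_type g B" using less.prems(3) by simp
    then obtain y where y: "y \<in> B" "card (cyc_orbit g y) = L" unfolding cycle_type_def using G.fin by auto
    let ?Q = "cyc_orbit g y"
    have ctA: "cycle_type f A = cycle_type f (A - ?O) + {#L#}" "permon f (A - ?O)"
      using permon_orbit_ct[OF less.prems(1) x] L_def by auto
    have ctB: "cycle_type g B = cycle_type g (B - ?Q) + {#L#}" "permon g (B - ?Q)"
      using permon_orbit_ct[OF less.prems(2) y(1)] y(2) by auto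
    have ct': "cycle_type f (A - ?O) = cycle_type g (B - ?Q)" using ctA ctB less.prems(3) by simp
    have "card (A - ?O) < card A"
      using F.fin F.self_in_orbit[of x] x by (intro psubset_card_mono) auto
    then obtain \<psi> where psi: "bij_betw \<psi> (A - ?O) (B - ?Q)" "\<forall>z\<in>A - ?O. \<psi> (f z) = g (\<psi> z)"
      using less.hyps ctA(2) ctB(2) ct' by blast
    have perf: "F.per x = L" using F.card_orbit[OF x] L_def by simp
    have perg: "G.per y = L" using G.card_orbit[OF y(1)] y(2) by simp
    define k where "k = the_inv_into {..<L} (\<lambda>k. (f ^^ k) x)"
    define \<phi>0 where "\<phi>0 = (\<lambda>z. (g ^^ k z) y)"
    have bf: "bij_betw (\<lambda>k. (f ^^ k) x) {..<L} ?O" using F.bij_orbit[OF x] perf by simp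
    have bg: "bij_betw (\<lambda>k. (g ^^ k) y) {..<L} ?Q" using G.bij_orbit[OF y(1)] perg by simp
    have bk: "bij_betw k ?O {..<L}" unfolding k_def by (rule bij_betw_the_inv_into[OF bf])
    have b0: "bij_betw \<phi>0 ?O ?Q" unfolding \<phi>0_def using bij_betw_trans[OF bk bg] by (simp add: comp_def)
    have kf: "k ((f ^^ j) x) = j" if "j < L" for j
      unfolding k_def using bf that by (intro the_inv_into_f_f) (auto simp: bij_betw_def)
    have comm0: "\<phi>0 (f z) = g (\<phi>0 z)" if z: "z \<in> ?O" for z
    proof -
      have kz: "k z < L" using bk z by (auto simp: bij_betw_def)
      have "(f ^^ k z) x = z" using z bf unfolding k_def
        by (intro f_the_inv_into_f) (auto simp: bij_betw_def)
      then have zk: "z = (f ^^ k z) x" by simp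
      have "f z = (f ^^ Suc (k z)) x" using zk by (metis funpow.simps(2) o_apply)
      also have "\<dots> = (f ^^ (Suc (k z) mod L)) x" using F.funpow_mod[OF x] perf by metis
      finally have fz: "f z = (f ^^ (Suc (k z) mod L)) x" .
      have L0: "L > 0" using kz by simp
      have "\<phi>0 (f z) = (g ^^ (Suc (k z) mod L)) y" unfolding \<phi>0_def fz using kf L0 by simp
      also have "\<dots> = (g ^^ Suc (k z)) y" using G.funpow_mod[OF y(1)] perg by metis
      also have "\<dots> = g (\<phi>0 z)" unfolding \<phi>0_def by simp
      finally show ?thesis .
    qed
    define \<phi> where "\<phi> = (\<lambda>z. if z \<in> ?O then \<phi>0 z else \<psi> z)"
    have OA: "?O \<subseteq> A" using F.orbit_subset[OF x] .
    have QB: "?Q \<subseteq> B" using G.orbit_subset[OF y(1)] .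
    have "bij_betw \<phi> (?O \<union> (A - ?O)) (?Q \<union> (B - ?Q))"
    proof (rule bij_betw_combine)
      show "bij_betw \<phi> ?O ?Q" using b0 unfolding \<phi>_def by (rule bij_betw_cong[THEN iffD1, rotated]) simp
      show "bij_betw \<phi> (A - ?O) (B - ?Q)" using psi(1) unfolding \<phi>_def by (rule bij_betw_cong[THEN iffD1, rotated]) simp
    qed auto
    moreover have "?O \<union> (A - ?O) = A" "?Q \<union> (B - ?Q) = B" using OA QB by auto
    ultimately have "bij_betw \<phi> A B" by simp
    moreover have "\<forall>z\<in>A. \<phi> (f z) = g (\<phi> z)"
    proof
      fix z assume z: "z \<in> A"
      show "\<phi> (f z) = g (\<phi> z)"
      proof (cases "z \<in> ?O")
        case True
        then have "f z \<in> ?O" using F.orbit_same[OF x] F.f_in_orbit by blast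
        then show ?thesis using True comm0 unfolding \<phi>_def by simp
      next
        case False
        then have "f z \<in> A - ?O" using F.closed_diff_orbit[OF x] z by blast
        then show ?thesis using False psi(2) z unfolding \<phi>_def by simp
      qed
    qed
    ultimately show ?thesis by blast
  qed
qed

lemma transport:
  fixes H :: "('b, 'c) monoid_scheme" and A :: "'a set"
  assumes H: "comm_group H" and sig: "\<sigma> \<in> hom H H" and phi: "bij_betw \<phi> A (carrier H)"
    and comm: "\<forall>x\<in>A. \<phi> (f x) = \<sigma> (\<phi> x)" and f: "bij_betw f A A"
  shows "\<exists>G::'a monoid. carrier G = A \<and> comm_group G \<and> f \<in> iso G G"
proof -
  interpret H: comm_group H by (rule H)
  define \<psi> where "\<psi> = the_inv_into A \<phi>"
  have psi1: "\<psi> (\<phi> x) = x" if "x \<in> A" for x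
    unfolding \<psi>_def using phi that by (simp add: bij_betw_def the_inv_into_f_f)
  have psi2: "\<phi> (\<psi> y) = y" if "y \<in> carrier H" for y
    unfolding \<psi>_def using phi that by (simp add: bij_betw_def f_the_inv_into_f)
  have psiA: "\<psi> y \<in> A" if "y \<in> carrier H" for y
    unfolding \<psi>_def using phi that by (simp add: bij_betw_def the_inv_into_into)
  have phiH: "\<phi> x \<in> carrier H" if "x \<in> A" for x using phi that by (auto simp: bij_betw_def)
  define G where "G = \<lparr>carrier = A, monoid.mult = (\<lambda>x y. \<psi> (\<phi> x \<otimes>\<^bsub>H\<^esub> \<phi> y)), one = \<psi> \<one>\<^bsub>H\<^esub>\<rparr>"
  have cg: "comm_group G"
  proof (rule comm_groupI)
    fix x y z assume xyz: "x \<in> carrier G" "y \<in> carrier G" "z \<in> carrier G"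
    then have h: "\<phi> x \<in> carrier H" "\<phi> y \<in> carrier H" "\<phi> z \<in> carrier H" using phiH by (auto simp: G_def)
    show "x \<otimes>\<^bsub>G\<^esub> y \<otimes>\<^bsub>G\<^esub> z = x \<otimes>\<^bsub>G\<^esub> (y \<otimes>\<^bsub>G\<^esub> z)"
      using h by (simp add: G_def psi2 H.m_assoc)
    show "x \<otimes>\<^bsub>G\<^esub> y = y \<otimes>\<^bsub>G\<^esub> x" using h by (simp add: G_def H.m_comm)
  next
    fix x y assume "x \<in> carrier G" "y \<in> carrier G"
    then show "x \<otimes>\<^bsub>G\<^esub> y \<in> carrier G" using phiH psiA by (simp add: G_def)
  next
    show "\<one>\<^bsub>G\<^esub> \<in> carrier G" using psiA by (simp add: G_def)
  next
    fix x assume "x \<in> carrier G"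
    then show "\<one>\<^bsub>G\<^esub> \<otimes>\<^bsub>G\<^esub> x = x" using phiH psi1 psi2 by (simp add: G_def)
  next
    fix x assume x: "x \<in> carrier G"
    then have h: "\<phi> x \<in> carrier H" using phiH by (simp add: G_def)
    show "\<exists>y\<in>carrier G. y \<otimes>\<^bsub>G\<^esub> x = \<one>\<^bsub>G\<^esub>"
      using h psi2 psiA by (intro bexI[of _ "\<psi> (inv\<^bsub>H\<^esub> \<phi> x)"]) (simp_all add: G_def)
  qed
  have "f \<in> hom G G"
  proof (rule homI)
    fix x assume "x \<in> carrier G" then show "f x \<in> carrier G" using f by (auto simp: G_def bij_betw_def)
  next
    fix x y assume xy: "x \<in> carrier G" "y \<in> carrier G"
    then have xy': "x \<in> A" "y \<in> A" by (auto simp: G_def)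
    have fxy: "f x \<in> A" "f y \<in> A" using xy' f by (auto simp: bij_betw_def)
    let ?w = "\<phi> x \<otimes>\<^bsub>H\<^esub> \<phi> y"
    have w: "?w \<in> carrier H" using xy' phiH by simp
    have "\<phi> (f (\<psi> ?w)) = \<sigma> ?w" using comm psiA[OF w] psi2[OF w] by simp
    also have "\<dots> = \<sigma> (\<phi> x) \<otimes>\<^bsub>H\<^esub> \<sigma> (\<phi> y)" using sig xy' phiH by (simp add: hom_mult)
    also have "\<dots> = \<phi> (f x) \<otimes>\<^bsub>H\<^esub> \<phi> (f y)" using comm xy' by simp
    finally have "\<psi> (\<phi> (f (\<psi> ?w))) = \<psi> (\<phi> (f x) \<otimes>\<^bsub>H\<^esub> \<phi> (f y))" by simp
    moreover have "f (\<psi> ?w) \<in> A" using psiA[OF w] f by (auto simp: bij_betw_def)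
    ultimately show "f (x \<otimes>\<^bsub>G\<^esub> y) = f x \<otimes>\<^bsub>G\<^esub> f y" using psi1 by (simp add: G_def)
  qed
  then have "f \<in> iso G G" using f by (simp add: iso_def G_def)
  then show ?thesis using cg by (intro exI[of _ G]) (simp add: G_def)
qed

lemma permon_compl:
  assumes "permon f A" "S \<subseteq> A" "f ` S \<subseteq> S"
  shows "f ` (A - S) \<subseteq> A - S"
proof -
  interpret permon f A by fact
  have finS: "finite S" using assms(2) fin finite_subset by blast
  have injS: "inj_on f S" using inj assms(2) inj_on_subset by blast
  have "f ` S = S" using card_image[OF injS] assms(3) finS by (simp add: card_subset_eq)
  then show ?thesis using closed inj assms(2) unfolding inj_on_def by blast
qed

lemma ct_split:
  assumes "permon f A" "S \<subseteq> A" "f ` S \<subseteq> S"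
  shows "cycle_type f A = cycle_type f S + cycle_type f (A - S)"
proof -
  interpret permon f A by fact
  have "A = S \<union> (A - S)" using assms(2) by blast
  then have "cycle_type f A = cycle_type f (S \<union> (A - S))" by simp
  also have "\<dots> = cycle_type f S + cycle_type f (A - S)"
    by (rule ct_union) (use fin assms permon_compl[OF assms] in \<open>auto intro: finite_subset\<close>)
  finally show ?thesis .
qed

lemma ct_piece:
  assumes "permon f A" "S \<subseteq> A" "f ` S \<subseteq> S" "\<And>x. x \<in> S \<Longrightarrow> card (cyc_orbit f x) = L"
  shows "cycle_type f S = replicate_mset (card S div L) L \<and> L dvd card S"
proof -
  interpret permon f A by fact
  have "permon f S" using fin assms inj by unfold_locales (auto intro: finite_subset inj_on_subset)
  then show ?thesis using permon.ct_uniform assms(4) by blast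
qed

locale fwd = comm_group G for G (structure) +
  fixes f :: "'a \<Rightarrow> 'a" and p :: nat
  assumes pr: "Factorial_Ring.prime p" and cardG: "card (carrier G) = p ^ 2" and iso: "f \<in> iso G G"
begin

lemma p2: "p \<ge> 2" using pr by (simp add: prime_ge_2_nat)

lemma finG: "finite (carrier G)" using cardG p2 by (metis card.infinite power_not_zero not_numeral_le_zero)

lemma bijf: "bij_betw f (carrier G) (carrier G)" using iso by (simp add: iso_def)

lemma homf: "f \<in> hom G G" using iso by (simp add: iso_def)

lemma gh: "group_hom G G f" using homf by (simp add: group_hom_def group_hom_axioms_def is_group)

lemma fc: "x \<in> carrier G \<Longrightarrow> f x \<in> carrier G" using homf by (simp add: hom_in_carrier)
lemma fm: "x \<in> carrier G \<Longrightarrow> y \<in> carrier G \<Longrightarrow> f (x \<otimes> y) = f x \<otimes> f y" using homf by (simp add: hom_mult)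
lemma f1: "f \<one> = \<one>" using group_hom.hom_one[OF gh] by simp
lemma finv: "x \<in> carrier G \<Longrightarrow> f (inv x) = inv (f x)" using group_hom.hom_inv[OF gh] by simp

lemma pm: "permon f (carrier G)"
  using finG bijf by unfold_locales (auto simp: bij_betw_def)

lemma fnc: "x \<in> carrier G \<Longrightarrow> (f ^^ n) x \<in> carrier G" by (induction n) (auto simp: fc)
lemma fnm: "x \<in> carrier G \<Longrightarrow> y \<in> carrier G \<Longrightarrow> (f ^^ n) (x \<otimes> y) = (f ^^ n) x \<otimes> (f ^^ n) y"
  by (induction n) (auto simp: fm fnc)
lemma fn1: "(f ^^ n) \<one> = \<one>" by (induction n) (auto simp: f1)
lemma fninv: "x \<in> carrier G \<Longrightarrow> (f ^^ n) (inv x) = inv ((f ^^ n) x)" by (induction n) (auto simp: finv fnc)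

definition Fix :: "nat \<Rightarrow> 'a set" where "Fix n = {x \<in> carrier G. (f ^^ n) x = x}"

lemma Fix_sub: "subgroup (Fix n) G"
  by (rule subgroupI) (auto simp: Fix_def fninv fnm fn1)

lemma Fix_inv: "f ` Fix n \<subseteq> Fix n"
  unfolding Fix_def using fc by (auto simp: funpow_swap1[symmetric])

abbreviation len :: "'a \<Rightarrow> nat" where "len x \<equiv> card (cyc_orbit f x)"

lemma len_dvd: "x \<in> carrier G \<Longrightarrow> (f ^^ n) x = x \<longleftrightarrow> len x dvd n"
  using permon.orbit_dvd[OF pm] by blast

lemma len_pos: "x \<in> carrier G \<Longrightarrow> len x > 0"
  using permon.card_orbit[OF pm] permon.per[OF pm] by metis

lemma Fix_iff: "x \<in> carrier G \<Longrightarrow> x \<in> Fix n \<longleftrightarrow> len x dvd n"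
  using len_dvd by (simp add: Fix_def)

lemma in_Fix_len: "x \<in> carrier G \<Longrightarrow> x \<in> Fix (len x)"
  using Fix_iff by simp

lemma sub_card: assumes "subgroup H G" shows "card H = 1 \<or> card H = p \<or> card H = p ^ 2"
proof -
  have "card (rcosets H) * card H = p ^ 2" using lagrange[OF assms] cardG by (simp add: order_def)
  then have "card H dvd p ^ 2" by (metis dvd_triv_right)
  then obtain i where "i \<le> 2" "card H = p ^ i" using divides_primepow_nat[OF pr] by blast
  then show ?thesis by (cases i) (auto simp: le_Suc_eq power2_eq_square)
qed

lemma sub_1: assumes "subgroup H G" "card H = 1" shows "H = {\<one>}"
  using assms subgroup.one_closed[OF assms(1)] by (metis card_1_singletonE singletonD)

lemma sub_full: assumes "subgroup H G" "card H = p ^ 2" shows "H = carrier G"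
  using assms card_subset_eq[OF finG] subgroup.subset cardG by metis

lemma p_less: "p < p ^ 2" using p2 by (simp add: power2_eq_square)

lemma sub_in_p:
  assumes "subgroup S G" "subgroup H G" "S \<subseteq> H" "card H = p"
  shows "S = {\<one>} \<or> S = H"
proof -
  have fH: "finite H" using assms(2) finG subgroup.subset finite_subset by blast
  have "card S \<le> p" using card_mono[OF fH assms(3)] assms(4) by simp
  then have "card S = 1 \<or> card S = p" using sub_card[OF assms(1)] p_less by auto
  then show ?thesis using sub_1[OF assms(1)] card_subset_eq[OF fH assms(3)] assms(4) by auto
qed

lemma uniform_p:
  assumes H: "subgroup H G" "card H = p" and x: "x \<in> H" "x \<noteq> \<one>" and y: "y \<in> H"
  shows "len y dvd len x"
proof -
  have xc: "x \<in> carrier G" using x H subgroup.subset by blast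
  have yc: "y \<in> carrier G" using y H subgroup.subset by blast
  have S: "subgroup (Fix (len x) \<inter> H) G" using subgroups_Inter_pair Fix_sub H by blast
  have "x \<in> Fix (len x) \<inter> H" using in_Fix_len xc x by blast
  then have "Fix (len x) \<inter> H = H" using sub_in_p[OF S H(1) _ H(2)] x by blast
  then have "y \<in> Fix (len x)" using y by blast
  then show ?thesis using Fix_iff yc by blast
qed

lemma H_minus1_inv:
  assumes "H \<subseteq> carrier G" "f ` H \<subseteq> H"
  shows "f ` (H - {\<one>}) \<subseteq> H - {\<one>}"
proof -
  have "f x \<noteq> \<one>" if "x \<in> carrier G" "x \<noteq> \<one>" for x
  proof
    assume "f x = \<one>"
    then have "f x = f \<one>" using f1 by simp
    then show False using that bijf one_closed unfolding bij_betw_def inj_on_def by blast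
  qed
  note * = this
  show ?thesis
  proof
    fix y assume "y \<in> f ` (H - {\<one>})"
    then obtain x where x: "x \<in> H - {\<one>}" "y = f x" by (rule imageE)
    then have xc: "x \<in> carrier G" using assms(1) by blast
    have "y \<noteq> \<one>" using *[OF xc] x by simp
    moreover have "y \<in> H" using x assms(2) by blast
    ultimately show "y \<in> H - {\<one>}" by simp
  qed
qed

end

lemma rep_plus: "replicate_mset a x + replicate_mset b x = replicate_mset (a + b) x"
  by (rule multiset_eqI) simp

lemma arith_c:
  fixes p m :: nat
  assumes "m dvd p - 1" "m > 0" "p \<ge> 1"
  shows "(p - 1)^2 div m + (p - 1) div m = (p^2 - p) div m"
proof -
  obtain q where q: "p - 1 = m * q" using assms(1) by blast
  then have p: "p = m * q + 1" using assms(3) by simp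
  have "(p - 1)^2 div m = m * q * q" using q assms(2) by (simp add: power2_eq_square)
  moreover have "(p - 1) div m = q" using q assms(2) by simp
  moreover have "p^2 - p = m * ((m * q + 1) * q)" unfolding p by (simp add: power2_eq_square algebra_simps)
  ultimately show ?thesis using assms(2) by (simp add: algebra_simps)
qed

context fwd
begin

lemma pm_sub: "S \<subseteq> carrier G \<Longrightarrow> f ` S \<subseteq> S \<Longrightarrow> permon f S"
  using finG bijf by unfold_locales (auto simp: bij_betw_def intro: finite_subset inj_on_subset)

lemma fn_in: "f ` S \<subseteq> S \<Longrightarrow> x \<in> S \<Longrightarrow> (f ^^ n) x \<in> S"
  by (induction n) auto

lemma ct_one: "cycle_type f {\<one>} = {#1#}"
proof -
  have "cyc_orbit f \<one> = {\<one>}" unfolding cyc_orbit_def using fn1 by auto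
  then show ?thesis unfolding cycle_type_def by simp
qed

lemma small_sub:
  assumes x: "x \<in> carrier G" "x \<noteq> \<one>" and nf: "Fix (len x) \<noteq> carrier G"
  shows "subgroup (Fix (len x)) G" "card (Fix (len x)) = p" "f ` Fix (len x) \<subseteq> Fix (len x)"
    "x \<in> Fix (len x)" "\<And>y. y \<in> Fix (len x) - {\<one>} \<Longrightarrow> len y = len x"
    "Fix (len x) \<subseteq> carrier G"
proof -
  let ?H = "Fix (len x)"
  show S: "subgroup ?H G" by (rule Fix_sub)
  show xH: "x \<in> ?H" using in_Fix_len x by simp
  show "f ` ?H \<subseteq> ?H" by (rule Fix_inv)
  show "?H \<subseteq> carrier G" using S subgroup.subset by blast
  have "card ?H \<noteq> 1" using sub_1[OF S] xH x by auto
  moreover have "card ?H \<noteq> p ^ 2" using sub_full[OF S] nf by auto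
  ultimately show cH: "card ?H = p" using sub_card[OF S] by auto
  fix y assume y: "y \<in> ?H - {\<one>}"
  show "len y = len x"
    using uniform_p[OF S cH xH x(2)] uniform_p[OF S cH _ _ xH, of y] y by (simp add: dvd_antisym)
qed

theorem fwd_main:
  shows "(\<exists>d. d > 0 \<and> d dvd p ^ 2 - 1 \<and>
        cycle_type f (carrier G) = replicate_mset ((p ^ 2 - 1) div d) d + {#1#}) \<or>
     (\<exists>d. d > 0 \<and> d dvd p - 1 \<and>
        cycle_type f (carrier G) = replicate_mset ((p - 1) div d) (p * d)
                       + replicate_mset ((p - 1) div d) d + {#1#}) \<or>
     (\<exists>d1 d2. d1 > 0 \<and> d2 > 0 \<and> d1 dvd p - 1 \<and> d2 dvd p - 1 \<and>
        cycle_type f (carrier G) = replicate_mset ((p - 1) ^ 2 div lcm d1 d2) (lcm d1 d2)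
                       + replicate_mset ((p - 1) div d1) d1
                       + replicate_mset ((p - 1) div d2) d2 + {#1#})"
    (is "?a \<or> ?b \<or> ?c")
proof -
  have one_inv: "f ` {\<one>} \<subseteq> {\<one>}" using f1 by simp
  have car_inv: "f ` carrier G \<subseteq> carrier G" using fc by blast
  have ct0: "cycle_type f (carrier G) = {#1#} + cycle_type f (carrier G - {\<one>})"
    using ct_split[OF pm, of "{\<one>}"] one_inv ct_one by simp
  show ?thesis
  proof (cases "\<forall>x \<in> carrier G - {\<one>}. Fix (len x) = carrier G")
    case True
    have card1: "card (carrier G - {\<one>}) = p ^ 2 - 1" using cardG finG by simp
    have "p ^ 2 - 1 > 0" using p_less p2 by simp
    then have "card (carrier G - {\<one>}) > 0" using card1 by simp
    then have "carrier G - {\<one>} \<noteq> {}" using card_gt_0_iff by blast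
    then obtain x0 where x0: "x0 \<in> carrier G - {\<one>}" by blast
    have L: "len y = len x0" if y: "y \<in> carrier G - {\<one>}" for y
    proof -
      have "y \<in> Fix (len x0)" using True x0 y by blast
      then have 1: "len y dvd len x0" using Fix_iff y by blast
      have "x0 \<in> Fix (len y)" using True x0 y by blast
      then have 2: "len x0 dvd len y" using Fix_iff x0 by blast
      show ?thesis using 1 2 by (simp add: dvd_antisym)
    qed
    have "cycle_type f (carrier G - {\<one>}) = replicate_mset (card (carrier G - {\<one>}) div len x0) (len x0)
          \<and> len x0 dvd card (carrier G - {\<one>})"
      by (rule ct_piece[OF pm]) (use H_minus1_inv[OF _ car_inv] L in auto)
    then have "?a" using ct0 card1 len_pos[of x0] x0 by (intro exI[of _ "len x0"]) (simp add: add.commute)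
    then show ?thesis by blast
  next
    case False
    then obtain x1 where x1: "x1 \<in> carrier G" "x1 \<noteq> \<one>" "Fix (len x1) \<noteq> carrier G" by blast
    define H1 where "H1 = Fix (len x1)"
    define d1 where "d1 = len x1"
    note H1 = small_sub[OF x1, folded H1_def d1_def]
    have d1pos: "d1 > 0" using len_pos x1 d1_def by simp
    have cH1m: "card (H1 - {\<one>}) = p - 1" using H1(2) subgroup.one_closed[OF H1(1)] by simp
    have ctH1: "cycle_type f (H1 - {\<one>}) = replicate_mset ((p - 1) div d1) d1 \<and> d1 dvd p - 1"
      using ct_piece[OF pm, of "H1 - {\<one>}" d1] H1 H_minus1_inv[OF H1(6) H1(3)] cH1m by auto
    have pmH1: "permon f H1" using pm_sub H1 by blast
    have ct1: "cycle_type f (carrier G) = {#1#} + cycle_type f (H1 - {\<one>}) + cycle_type f (carrier G - H1)"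
      using ct_split[OF pm H1(6) H1(3)] ct_split[OF pmH1, of "{\<one>}"] one_inv ct_one
        subgroup.one_closed[OF H1(1)] by simp
    have compl1: "f ` (carrier G - H1) \<subseteq> carrier G - H1" using permon_compl[OF pm H1(6) H1(3)] .
    have pmC1: "permon f (carrier G - H1)" using pm_sub[OF _ compl1] by blast
    have cC1: "card (carrier G - H1) = p ^ 2 - p" using H1(2,6) cardG finG by (simp add: card_Diff_subset finite_subset)
    show ?thesis
    proof (cases "\<exists>x2 \<in> carrier G - H1. Fix (len x2) \<noteq> carrier G")
      case True
      then obtain x2 where x2: "x2 \<in> carrier G" "x2 \<notin> H1" "Fix (len x2) \<noteq> carrier G" by blast
      have x21: "x2 \<noteq> \<one>" using x2 subgroup.one_closed[OF H1(1)] by auto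
      define H2 where "H2 = Fix (len x2)"
      define d2 where "d2 = len x2"
      note H2 = small_sub[OF x2(1) x21 x2(3), folded H2_def d2_def]
      have d2pos: "d2 > 0" using len_pos x2 d2_def by simp
      have cH2m: "card (H2 - {\<one>}) = p - 1" using H2(2) subgroup.one_closed[OF H2(1)] by simp
      have ctH2: "cycle_type f (H2 - {\<one>}) = replicate_mset ((p - 1) div d2) d2 \<and> d2 dvd p - 1"
        using ct_piece[OF pm, of "H2 - {\<one>}" d2] H2 H_minus1_inv[OF H2(6) H2(3)] cH2m by auto
      have int: "H1 \<inter> H2 = {\<one>}"
      proof -
        have S: "subgroup (H1 \<inter> H2) G" using subgroups_Inter_pair H1(1) H2(1) by blast
        have "H1 \<inter> H2 = {\<one>} \<or> H1 \<inter> H2 = H1" using sub_in_p[OF S H1(1) _ H1(2)] by blast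
        moreover have "H1 \<inter> H2 \<noteq> H1"
        proof
          assume "H1 \<inter> H2 = H1"
          then have "H1 \<subseteq> H2" by blast
          moreover have "finite H2" using H2(6) finG finite_subset by blast
          ultimately have "H1 = H2" using card_subset_eq H1(2) H2(2) by metis
          then show False using x2 H2(4) by blast
        qed
        ultimately show ?thesis by blast
      qed
      have H1c: "H1 \<subseteq> carrier G" by (rule H1(6))
      have H2c: "H2 \<subseteq> carrier G" by (rule H2(6))
      have uniq: "a = a' \<and> b = b'" if ab: "a \<in> H1" "a' \<in> H1" "b \<in> H2" "b' \<in> H2" "a \<otimes> b = a' \<otimes> b'" for a a' b b'
      proof -
        have c: "a \<in> carrier G" "a' \<in> carrier G" "b \<in> carrier G" "b' \<in> carrier G" using ab H1c H2c by auto
        have "inv a' \<otimes> a = b' \<otimes> inv b"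
        proof -
          have "inv a' \<otimes> a = inv a' \<otimes> (a \<otimes> b) \<otimes> inv b" using c by (simp add: m_assoc)
          also have "\<dots> = inv a' \<otimes> (a' \<otimes> b') \<otimes> inv b" using ab by simp
          also have "\<dots> = b' \<otimes> inv b" using c by (simp add: m_assoc[symmetric])
          finally show ?thesis .
        qed
        moreover have "inv a' \<otimes> a \<in> H1" using ab H1(1) by (simp add: subgroup.m_closed subgroup.m_inv_closed)
        moreover have "b' \<otimes> inv b \<in> H2" using ab H2(1) by (simp add: subgroup.m_closed subgroup.m_inv_closed)
        ultimately have "inv a' \<otimes> a = \<one>" "b' \<otimes> inv b = \<one>" using int by auto
        then show ?thesis using c by (metis inv_equality inv_inv r_inv_ex inv_closed l_inv_ex
              group.inv_comm is_group)
      qed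
      have decomp: "\<exists>a\<in>H1. \<exists>b\<in>H2. z = a \<otimes> b" if z: "z \<in> carrier G" for z
      proof -
        let ?mu = "\<lambda>(a, b). a \<otimes> b"
        have inj: "inj_on ?mu (H1 \<times> H2)" using uniq unfolding inj_on_def by auto
        have fH1: "finite H1" "finite H2" using H1c H2c finG finite_subset by auto
        have "card (?mu ` (H1 \<times> H2)) = p ^ 2"
          using card_image[OF inj] H1(2) H2(2) fH1 by (simp add: card_cartesian_product power2_eq_square)
        moreover have "?mu ` (H1 \<times> H2) \<subseteq> carrier G" using H1c H2c by auto
        ultimately have "?mu ` (H1 \<times> H2) = carrier G" using card_subset_eq[OF finG] cardG by metis
        then have "z \<in> ?mu ` (H1 \<times> H2)" using z by simp
        then obtain ab where ab: "ab \<in> H1 \<times> H2" "z = ?mu ab" by (rule imageE)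
        then show ?thesis by (cases ab) auto
      qed
      define R where "R = carrier G - (H1 \<union> H2)"
      have lenR: "len z = lcm d1 d2" if z: "z \<in> R" for z
      proof -
        have zc: "z \<in> carrier G" using z R_def by simp
        obtain a b where ab: "a \<in> H1" "b \<in> H2" "z = a \<otimes> b" using decomp[OF zc] by blast
        have a1: "a \<noteq> \<one>" using ab z R_def H2c by auto
        have b1: "b \<noteq> \<one>" using ab z R_def H1c by auto
        have c: "a \<in> carrier G" "b \<in> carrier G" using ab H1c H2c by auto
        have la: "len a = d1" using H1(5) ab a1 by blast
        have lb: "len b = d2" using H2(5) ab b1 by blast
        show ?thesis
        proof (rule permon.card_orbit_eqI[OF pm zc])
          fix n
          have "(f ^^ n) z = (f ^^ n) a \<otimes> (f ^^ n) b" using ab c fnm by simp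
          moreover have "(f ^^ n) a \<in> H1" "(f ^^ n) b \<in> H2" using fn_in H1(3) H2(3) ab by auto
          ultimately have "(f ^^ n) z = z \<longleftrightarrow> (f ^^ n) a = a \<and> (f ^^ n) b = b"
            using uniq ab by metis
          also have "\<dots> \<longleftrightarrow> d1 dvd n \<and> d2 dvd n" using len_dvd c la lb by simp
          finally show "(f ^^ n) z = z \<longleftrightarrow> lcm d1 d2 dvd n" by simp
        qed
      qed
      have U: "H1 \<union> H2 \<subseteq> carrier G" "f ` (H1 \<union> H2) \<subseteq> H1 \<union> H2" using H1c H2c H1(3) H2(3) by auto
      have Rinv: "f ` R \<subseteq> R" unfolding R_def using permon_compl[OF pm U] .
      have cU: "card (H1 \<union> H2) = 2 * p - 1"
      proof -
        have "card (H1 \<union> H2) + card (H1 \<inter> H2) = card H1 + card H2"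
          using card_Un_Int H1c H2c finG finite_subset by metis
        then show ?thesis using int H1(2) H2(2) by simp
      qed
      have cR: "card R = (p - 1) ^ 2"
      proof -
        have "card R = card (carrier G) - card (H1 \<union> H2)" unfolding R_def
          using U(1) finG by (meson card_Diff_subset finite_subset)
        also have "\<dots> = p ^ 2 - (2 * p - 1)" using cU cardG by simp
        also have "\<dots> = (p - 1) ^ 2" using p2 by (simp add: power2_eq_square algebra_simps)
        finally show ?thesis .
      qed
      have ctR: "cycle_type f R = replicate_mset ((p - 1) ^ 2 div lcm d1 d2) (lcm d1 d2)"
        using ct_piece[OF pm, of R "lcm d1 d2"] Rinv lenR cR R_def by auto
      have H2sub: "H2 - {\<one>} \<subseteq> carrier G - H1" using int H2c by blast
      have ct2: "cycle_type f (carrier G - H1) = cycle_type f (H2 - {\<one>}) + cycle_type f R"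
      proof -
        have "(carrier G - H1) - (H2 - {\<one>}) = R" unfolding R_def using subgroup.one_closed[OF H1(1)] by blast
        then show ?thesis using ct_split[OF pmC1 H2sub H_minus1_inv[OF H2c H2(3)]] by simp
      qed
      have "?c"
        using ct1 ct2 ctR ctH1 ctH2 d1pos d2pos
        by (intro exI[of _ d1] exI[of _ d2]) (simp add: add_ac)
      then show ?thesis by blast
    next
      case False
      then have allbig: "\<And>x. x \<in> carrier G - H1 \<Longrightarrow> Fix (len x) = carrier G" by blast
      have "card (carrier G - H1) > 0" using cC1 p_less by simp
      then have "carrier G - H1 \<noteq> {}" using card_gt_0_iff by blast
      then obtain x2 where x2: "x2 \<in> carrier G - H1" by blast
      define m where "m = len x2"
      have lm: "len y = m" if y: "y \<in> carrier G - H1" for y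
      proof -
        have "y \<in> Fix (len x2)" using allbig x2 y by blast
        then have 1: "len y dvd len x2" using Fix_iff y by blast
        have "x2 \<in> Fix (len y)" using allbig x2 y by blast
        then have 2: "len x2 dvd len y" using Fix_iff x2 by blast
        show ?thesis using 1 2 m_def by (simp add: dvd_antisym)
      qed
      have mpos: "m > 0" using len_pos x2 m_def by simp
      have ctC: "cycle_type f (carrier G - H1) = replicate_mset ((p ^ 2 - p) div m) m"
        using ct_piece[OF pm _ compl1, of m] lm cC1 by auto
      have d1m: "d1 dvd m"
      proof -
        have "x1 \<in> Fix m" using allbig x2 m_def x1 by blast
        then show ?thesis using Fix_iff x1 d1_def by blast
      qed
      have ctA: "cycle_type f (carrier G) = {#1#} + replicate_mset ((p - 1) div d1) d1 + replicate_mset ((p ^ 2 - p) div m) m"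
        using ct1 ctH1 ctC by simp
      define g where "g = f ^^ d1"
      define psi where "psi = (\<lambda>x. g x \<otimes> inv x)"
      have gc: "x \<in> carrier G \<Longrightarrow> g x \<in> carrier G" for x unfolding g_def by (rule fnc)
      have psic: "x \<in> carrier G \<Longrightarrow> psi x \<in> carrier G" for x unfolding psi_def using gc by simp
      have psim: "psi (x \<otimes> y) = psi x \<otimes> psi y" if "x \<in> carrier G" "y \<in> carrier G" for x y
        unfolding psi_def g_def using that fnc by (simp add: fnm inv_mult m_ac)
      have psiinv: "psi (inv x) = inv (psi x)" if "x \<in> carrier G" for x
        unfolding psi_def g_def using that fnc by (simp add: fninv inv_mult m_ac)
      have psi1: "psi \<one> = \<one>" unfolding psi_def g_def by (simp add: fn1)
      have gpsi: "g x = psi x \<otimes> x" if "x \<in> carrier G" for x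
        unfolding psi_def using that gc by (simp add: m_assoc)
      have ker: "psi x = \<one> \<longleftrightarrow> x \<in> H1" if x: "x \<in> carrier G" for x
      proof -
        have "psi x = \<one> \<longleftrightarrow> g x = x" using gpsi[OF x] psic[OF x] x by (metis l_one r_cancel_one)
        then show ?thesis unfolding H1_def g_def Fix_def d1_def using x by simp
      qed
      have fpsi: "f (psi x) = psi (f x)" if x: "x \<in> carrier G" for x
        unfolding psi_def g_def using x fnc by (simp add: fm finv funpow_swap1)
      show ?thesis
      proof (cases "\<exists>x\<in>carrier G. psi x \<notin> H1")
        case True
        then obtain x where x: "x \<in> carrier G" "psi x \<notin> H1" by blast
        define J where "J = psi ` carrier G"
        have Jsub: "subgroup J G"
          unfolding J_def
        proof (rule subgroupI)
          show "psi ` carrier G \<subseteq> carrier G" using psic by blast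
          show "psi ` carrier G \<noteq> {}" by auto
          show "inv a \<in> psi ` carrier G" if "a \<in> psi ` carrier G" for a
          proof -
            obtain y where y: "y \<in> carrier G" "a = psi y" using \<open>a \<in> psi ` carrier G\<close> by blast
            then have "inv a = psi (inv y)" using psiinv by simp
            then show ?thesis using y by simp
          qed
          show "a \<otimes> b \<in> psi ` carrier G" if "a \<in> psi ` carrier G" "b \<in> psi ` carrier G" for a b
          proof -
            obtain y where y: "y \<in> carrier G" "a = psi y" using \<open>a \<in> psi ` carrier G\<close> by blast
            obtain z where z: "z \<in> carrier G" "b = psi z" using \<open>b \<in> psi ` carrier G\<close> by blast
            have "a \<otimes> b = psi (y \<otimes> z)" using psim y z by simp
            then show ?thesis using y z by simp
          qed
        qed
        have Jc: "J \<subseteq> carrier G" using Jsub subgroup.subset by blast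
        have Jinv: "f ` J \<subseteq> J"
        proof
          fix a assume "a \<in> f ` J"
          then obtain y where y: "y \<in> carrier G" "a = f (psi y)" unfolding J_def by blast
          then have "a = psi (f y)" using fpsi by simp
          then show "a \<in> J" unfolding J_def using y fc by simp
        qed
        have "\<not> inj_on psi (carrier G)"
        proof
          assume "inj_on psi (carrier G)"
          moreover have "psi x1 = psi \<one>" using psi1 ker[OF x1(1)] H1(4) by simp
          ultimately show False using x1 one_closed unfolding inj_on_def by blast
        qed
        then have "card J \<noteq> card (carrier G)" unfolding J_def using eq_card_imp_inj_on[OF finG] by blast
        moreover have "card J \<le> card (carrier G)" unfolding J_def using card_image_le[OF finG] by blast
        ultimately have "card J < p ^ 2" using cardG by simp
        moreover have "card J \<noteq> 1"
        proof
          assume "card J = 1"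
          then have "J = {\<one>}" using sub_1[OF Jsub] by simp
          then show False using x ker[OF x(1)] psic unfolding J_def
            by (metis imageI singletonD subgroup.one_closed H1(1))
        qed
        ultimately have cJ: "card J = p" using sub_card[OF Jsub] by auto
        have JH: "J \<inter> H1 = {\<one>}"
        proof -
          have S: "subgroup (J \<inter> H1) G" using subgroups_Inter_pair Jsub H1(1) by blast
          have "psi x \<in> J" "psi x \<notin> H1" unfolding J_def using x by auto
          then have "J \<inter> H1 \<noteq> J" by blast
          then show ?thesis using sub_in_p[OF S Jsub _ cJ] by blast
        qed
        have "cycle_type f (J - {\<one>}) = replicate_mset (card (J - {\<one>}) div m) m \<and> m dvd card (J - {\<one>})"
          by (rule ct_piece[OF pm]) (use Jc H_minus1_inv[OF Jc Jinv] JH lm in auto)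
        moreover have "card (J - {\<one>}) = p - 1" using cJ subgroup.one_closed[OF Jsub] by simp
        ultimately have mdvd: "m dvd p - 1" by simp
        have "lcm d1 m = m" using d1m by simp
        then have "?c" using ctA ctH1 mpos d1pos mdvd arith_c[OF mdvd mpos] p2
          apply (rule_tac exI[of _ d1], rule_tac exI[of _ m])
          by (simp add: add_ac rep_plus)
        then show ?thesis by blast
      next
        case False
        then have psiH: "\<And>x. x \<in> carrier G \<Longrightarrow> psi x \<in> H1" by blast
        have x2c: "x2 \<in> carrier G" "x2 \<notin> H1" using x2 by auto
        define h where "h = psi x2"
        have hH: "h \<in> H1" using psiH x2c h_def by simp
        have hc: "h \<in> carrier G" using hH H1(6) by blast
        have h1: "h \<noteq> \<one>" using ker[OF x2c(1)] x2c h_def by simp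
        have gh: "g h = h" using hH unfolding H1_def Fix_def g_def d1_def by simp
        have ghn: "g (h [^] n) = h [^] n" for n :: nat
        proof (induction n)
          case 0 then show ?case unfolding g_def by (simp add: fn1)
        next
          case (Suc n)
          have "g (h [^] Suc n) = g (h [^] n) \<otimes> g h" unfolding g_def using hc by (simp add: fnm)
          then show ?case using Suc gh by simp
        qed
        have iter: "(f ^^ (d1 * n)) x2 = h [^] n \<otimes> x2" for n
        proof (induction n)
          case 0 then show ?case using x2c by simp
        next
          case (Suc n)
          have "(f ^^ (d1 * Suc n)) x2 = g ((f ^^ (d1 * n)) x2)" unfolding g_def
            by (simp add: funpow_add)
          also have "\<dots> = g (h [^] n) \<otimes> g x2" using Suc x2c hc unfolding g_def by (simp add: fnm)
          also have "\<dots> = h [^] n \<otimes> (h \<otimes> x2)" using ghn gpsi[OF x2c(1)] h_def by simp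
          also have "\<dots> = h [^] Suc n \<otimes> x2" using hc x2c by (simp add: m_assoc)
          finally show ?case .
        qed
        have ordh: "ord h = p"
        proof -
          have "ord h dvd p ^ 2" using ord_dvd_group_order[OF hc] cardG by (simp add: order_def)
          then obtain i where i: "i \<le> 2" "ord h = p ^ i" using divides_primepow_nat[OF pr] by blast
          have "ord h \<noteq> 1" using ord_eq_1[OF hc] h1 by simp
          moreover have "ord h \<le> p"
          proof -
            have "generate G {h} \<subseteq> H1" using generate_subgroup_incl[OF _ H1(1)] hH by blast
            moreover have "finite H1" using H1(6) finG finite_subset by blast
            ultimately show ?thesis using generate_pow_card[OF hc] card_mono H1(2) by metis
          qed
          ultimately show ?thesis using i p_less by (cases i) (auto simp: le_Suc_eq)
        qed
        have key: "(f ^^ (d1 * n)) x2 = x2 \<longleftrightarrow> p dvd n" for n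
          using iter[of n] pow_eq_id[OF hc, of n] ordh hc x2c by simp
        have lx2: "len x2 = m" using m_def by simp
        obtain s where s: "m = d1 * s" using d1m by blast
        have "(f ^^ (d1 * s)) x2 = x2" using len_dvd[OF x2c(1)] lx2 s by simp
        then have "p dvd s" using key by simp
        moreover have "(f ^^ (d1 * p)) x2 = x2" using key by simp
        then have "d1 * s dvd d1 * p" using len_dvd[OF x2c(1)] lx2 s by simp
        then have "s dvd p" using d1pos by simp
        ultimately have "s = p" by (simp add: dvd_antisym)
        then have mp: "m = p * d1" using s by simp
        have "(p ^ 2 - p) div m = (p - 1) div d1"
        proof -
          have "p ^ 2 - p = p * (p - 1)" by (simp add: power2_eq_square diff_mult_distrib2)
          then show ?thesis unfolding mp using p2 by simp
        qed
        then have "?b" using ctA ctH1 d1pos mp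
          by (intro exI[of _ d1]) (simp add: add_ac)
        then show ?thesis by blast
      qed
    qed
  qed
qed

end

definition Zp2 :: "nat \<Rightarrow> (nat \<times> nat) monoid" where
  "Zp2 p = \<lparr>carrier = {..<p} \<times> {..<p},
     monoid.mult = (\<lambda>u v. ((fst u + fst v) mod p, (snd u + snd v) mod p)), one = (0, 0)\<rparr>"

lemma Zp2_cg: assumes "p > 0" shows "comm_group (Zp2 p)"
proof (rule comm_groupI)
  fix x y z assume "x \<in> carrier (Zp2 p)" "y \<in> carrier (Zp2 p)" "z \<in> carrier (Zp2 p)"
  show "x \<otimes>\<^bsub>Zp2 p\<^esub> y \<otimes>\<^bsub>Zp2 p\<^esub> z = x \<otimes>\<^bsub>Zp2 p\<^esub> (y \<otimes>\<^bsub>Zp2 p\<^esub> z)"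
    by (simp add: Zp2_def mod_simps add_ac)
  show "x \<otimes>\<^bsub>Zp2 p\<^esub> y = y \<otimes>\<^bsub>Zp2 p\<^esub> x" by (simp add: Zp2_def add_ac)
next
  fix x y assume "x \<in> carrier (Zp2 p)" "y \<in> carrier (Zp2 p)"
  then show "x \<otimes>\<^bsub>Zp2 p\<^esub> y \<in> carrier (Zp2 p)" using assms by (simp add: Zp2_def)
next
  show "\<one>\<^bsub>Zp2 p\<^esub> \<in> carrier (Zp2 p)" using assms by (simp add: Zp2_def)
next
  fix x assume "x \<in> carrier (Zp2 p)"
  then show "\<one>\<^bsub>Zp2 p\<^esub> \<otimes>\<^bsub>Zp2 p\<^esub> x = x" by (auto simp: Zp2_def)
next
  fix x assume x: "x \<in> carrier (Zp2 p)"
  show "\<exists>y\<in>carrier (Zp2 p). y \<otimes>\<^bsub>Zp2 p\<^esub> x = \<one>\<^bsub>Zp2 p\<^esub>"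
  proof (intro bexI)
    show "((p - fst x) mod p, (p - snd x) mod p) \<otimes>\<^bsub>Zp2 p\<^esub> x = \<one>\<^bsub>Zp2 p\<^esub>"
      using x by (auto simp: Zp2_def mod_simps)
    show "((p - fst x) mod p, (p - snd x) mod p) \<in> carrier (Zp2 p)" using assms by (simp add: Zp2_def)
  qed
qed

lemma Zp2_card: "card (carrier (Zp2 p)) = p ^ 2"
  by (simp add: Zp2_def card_cartesian_product power2_eq_square)

definition lin :: "nat \<Rightarrow> nat \<Rightarrow> nat \<Rightarrow> nat \<Rightarrow> nat \<Rightarrow> nat \<times> nat \<Rightarrow> nat \<times> nat" where
  "lin p \<alpha> \<beta> \<gamma> \<delta> z = ((\<alpha> * fst z + \<beta> * snd z) mod p, (\<gamma> * fst z + \<delta> * snd z) mod p)"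

lemma modlin: "(\<alpha> * (u mod p) + \<beta> * (v mod p)) mod p = (\<alpha> * u + \<beta> * v) mod (p::nat)"
  by (metis mod_add_eq mod_mult_right_eq)

lemma modlin2: "(\<alpha> * ((a + c) mod p) + \<beta> * ((b + d) mod p)) mod p
   = ((\<alpha> * a + \<beta> * b) mod p + (\<alpha> * c + \<beta> * d) mod p) mod (p::nat)"
  by (simp only: modlin mod_add_eq) (simp add: algebra_simps)

lemma lin_hom: assumes "p > 0" shows "lin p \<alpha> \<beta> \<gamma> \<delta> \<in> hom (Zp2 p) (Zp2 p)"
proof (rule homI)
  fix x assume "x \<in> carrier (Zp2 p)"
  then show "lin p \<alpha> \<beta> \<gamma> \<delta> x \<in> carrier (Zp2 p)" using assms by (simp add: Zp2_def lin_def)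
next
  fix x y assume "x \<in> carrier (Zp2 p)" "y \<in> carrier (Zp2 p)"
  show "lin p \<alpha> \<beta> \<gamma> \<delta> (x \<otimes>\<^bsub>Zp2 p\<^esub> y) = lin p \<alpha> \<beta> \<gamma> \<delta> x \<otimes>\<^bsub>Zp2 p\<^esub> lin p \<alpha> \<beta> \<gamma> \<delta> y"
    by (simp add: Zp2_def lin_def modlin2)
qed

lemma realize:
  fixes H :: "('b, 'c) monoid_scheme" and A :: "'a set"
  assumes "comm_group H" "\<sigma> \<in> hom H H" "permon \<sigma> (carrier H)"
    "cycle_type \<sigma> (carrier H) = cycle_type f A" "bij_betw f A A" "finite A"
  shows "\<exists>G::'a monoid. carrier G = A \<and> comm_group G \<and> f \<in> iso G G"
proof -
  have "permon f A" using assms(5,6) by unfold_locales (auto simp: bij_betw_def)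
  then obtain \<phi> where "bij_betw \<phi> A (carrier H)" "\<forall>x\<in>A. \<phi> (f x) = \<sigma> (\<phi> x)"
    using conj_exists[of f A \<sigma> "carrier H"] assms(3,4) by metis
  then show ?thesis using transport[OF assms(1,2)] assms(5) by blast
qed

lemma inj_from_period:
  assumes "\<forall>z\<in>B. (\<sigma> ^^ N) z = z" "N > 0"
  shows "inj_on \<sigma> B"
proof (rule inj_onI)
  fix x y assume xy: "x \<in> B" "y \<in> B" "\<sigma> x = \<sigma> y"
  have N: "N = Suc (N - 1)" using assms(2) by simp
  have "(\<sigma> ^^ N) z = (\<sigma> ^^ (N - 1)) (\<sigma> z)" for z
    by (subst N, simp only: funpow_Suc_right o_apply)
  then have "(\<sigma> ^^ N) x = (\<sigma> ^^ N) y" using xy by simp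
  then show "x = y" using assms(1) xy by simp
qed

lemma ct_union4:
  assumes "finite S1" "finite S2" "finite S3" "finite S4"
    "f ` S1 \<subseteq> S1" "f ` S2 \<subseteq> S2" "f ` S3 \<subseteq> S3" "f ` S4 \<subseteq> S4"
    "S1 \<inter> S2 = {}" "S1 \<inter> S3 = {}" "S1 \<inter> S4 = {}" "S2 \<inter> S3 = {}" "S2 \<inter> S4 = {}" "S3 \<inter> S4 = {}"
  shows "cycle_type f (S1 \<union> S2 \<union> S3 \<union> S4) = cycle_type f S1 + cycle_type f S2 + cycle_type f S3 + cycle_type f S4"
proof -
  have "cycle_type f (S1 \<union> S2 \<union> S3 \<union> S4) = cycle_type f (S1 \<union> S2 \<union> S3) + cycle_type f S4"
    by (rule ct_union) (use assms in auto)
  moreover have "cycle_type f (S1 \<union> S2 \<union> S3) = cycle_type f (S1 \<union> S2) + cycle_type f S3"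
    by (rule ct_union) (use assms in auto)
  moreover have "cycle_type f (S1 \<union> S2) = cycle_type f S1 + cycle_type f S2"
    by (rule ct_union) (use assms in auto)
  ultimately show ?thesis by simp
qed

lemma ct_fixpt: "f x = x \<Longrightarrow> cycle_type f {x} = {#1#}"
proof -
  assume "f x = x"
  then have "(f ^^ n) x = x" for n by (induction n) auto
  then have "cyc_orbit f x = {x}" unfolding cyc_orbit_def by auto
  then show ?thesis unfolding cycle_type_def by simp
qed

lemma exists_ord:
  assumes "Factorial_Ring.prime p" "d dvd p - 1" "d > 0"
  shows "\<exists>a. coprime p a \<and> ord p a = d"
proof -
  have p1: "p > 1" using assms(1) prime_gt_1_nat by blast
  have "card {x \<in> totatives p. ord p x = d} = totient d"
    using prime_card_elements_with_ord_eq_totient[OF p1 assms(1)] assms(2) by simp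
  then have "card {x \<in> totatives p. ord p x = d} > 0" using assms(3) by simp
  then have "{x \<in> totatives p. ord p x = d} \<noteq> {}" using card_gt_0_iff by blast
  then obtain a where "ord p a = d" by blast
  then show ?thesis using assms(3) ord_eq_0[of p a] by auto
qed

lemma mod_cancel_x:
  fixes p x c :: nat
  assumes "Factorial_Ring.prime p" "x < p" "x \<noteq> 0"
  shows "(c * x) mod p = x \<longleftrightarrow> [c = 1] (mod p)"
proof -
  have cop: "coprime x p" using assms prime_imp_coprime[of p x] by (simp add: coprime_commute nat_dvd_not_less)
  have "(c * x) mod p = x \<longleftrightarrow> [c * x = 1 * x] (mod p)" using assms(2) by (simp add: cong_def)
  also have "\<dots> \<longleftrightarrow> [c = 1] (mod p)" by (rule cong_mult_rcancel_nat[OF cop])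
  finally show ?thesis .
qed

lemma mod_mult_zero:
  fixes p x a :: nat
  assumes "Factorial_Ring.prime p" "x < p" "coprime p a"
  shows "(a * x) mod p = 0 \<longleftrightarrow> x = 0"
proof -
  have "\<not> p dvd a"
  proof
    assume "p dvd a"
    then have "p = 1" using coprime_common_divisor_nat[OF assms(3) dvd_refl] by simp
    then show False using assms(1) by simp
  qed
  then have "p dvd a * x \<longleftrightarrow> p dvd x" using assms(1) prime_dvd_mult_iff by blast
  then show ?thesis using assms(2) by (auto simp: nat_dvd_not_less dvd_eq_mod_eq_0[symmetric])
qed

lemma fix1:
  fixes p x c :: nat
  assumes "Factorial_Ring.prime p" "x < p"
  shows "(c ^ n * x) mod p = x \<longleftrightarrow> (x = 0 \<or> ord p c dvd n)"
proof (cases "x = 0")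
  case True then show ?thesis by simp
next
  case False
  then show ?thesis using mod_cancel_x[OF assms False, of "c ^ n"] ord_divides[of c n p] by simp
qed

theorem bwd_c:
  assumes pr: "Factorial_Ring.prime p" and d: "d1 > 0" "d2 > 0" "d1 dvd p - 1" "d2 dvd p - 1"
  shows "\<exists>\<sigma>. \<sigma> \<in> hom (Zp2 p) (Zp2 p) \<and> permon \<sigma> (carrier (Zp2 p)) \<and>
    cycle_type \<sigma> (carrier (Zp2 p)) = replicate_mset ((p - 1) ^ 2 div lcm d1 d2) (lcm d1 d2)
                       + replicate_mset ((p - 1) div d1) d1
                       + replicate_mset ((p - 1) div d2) d2 + {#1#}"
proof -
  have p0: "p > 0" using pr prime_gt_0_nat by blast
  obtain a1 where a1: "coprime p a1" "ord p a1 = d1" using exists_ord[OF pr d(3,1)] by blast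
  obtain a2 where a2: "coprime p a2" "ord p a2 = d2" using exists_ord[OF pr d(4,2)] by blast
  define \<sigma> where "\<sigma> = lin p a1 0 0 a2"
  define B where "B = carrier (Zp2 p)"
  have B: "B = {..<p} \<times> {..<p}" unfolding B_def Zp2_def by simp
  have hom: "\<sigma> \<in> hom (Zp2 p) (Zp2 p)" unfolding \<sigma>_def by (rule lin_hom[OF p0])
  have sig: "\<sigma> (x, y) = ((a1 * x) mod p, (a2 * y) mod p)" for x y unfolding \<sigma>_def lin_def by simp
  have iter: "(\<sigma> ^^ n) (x, y) = ((a1 ^ n * x) mod p, (a2 ^ n * y) mod p)" if "x < p" "y < p" for n x y
  proof (induction n)
    case 0 then show ?case using that by simp
  next
    case (Suc n)
    then show ?case by (simp add: sig mod_mult_right_eq mult.assoc)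
  qed
  have fixed: "(\<sigma> ^^ n) (x, y) = (x, y) \<longleftrightarrow> (x = 0 \<or> d1 dvd n) \<and> (y = 0 \<or> d2 dvd n)"
    if "x < p" "y < p" for n x y
    using iter[OF that, of n] fix1[OF pr that(1), of a1 n] fix1[OF pr that(2), of a2 n] a1 a2 by simp
  have closed: "\<sigma> ` B \<subseteq> B" unfolding B_def using hom by (auto simp: hom_in_carrier)
  have "\<forall>z\<in>B. (\<sigma> ^^ (d1 * d2)) z = z" using fixed B by auto
  then have inj: "inj_on \<sigma> B" by (rule inj_from_period) (use d in simp)
  have finB: "finite B" using B by simp
  have pm: "permon \<sigma> B" using finB closed inj by unfold_locales
  define S1 where "S1 = {(0::nat, 0::nat)}"
  define S2 where "S2 = {1..<p} \<times> {0::nat}"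
  define S3 where "S3 = {0::nat} \<times> {1..<p}"
  define S4 where "S4 = {1..<p} \<times> {1..<p}"
  have BU: "B = S1 \<union> S2 \<union> S3 \<union> S4" unfolding B S1_def S2_def S3_def S4_def using p0 by auto
  have z1: "(a1 * x) mod p = 0 \<longleftrightarrow> x = 0" if "x < p" for x using mod_mult_zero[OF pr that a1(1)] .
  have z2: "(a2 * x) mod p = 0 \<longleftrightarrow> x = 0" if "x < p" for x using mod_mult_zero[OF pr that a2(1)] .
  have z1': "1 \<le> (a1 * x) mod p" if "1 \<le> x" "x < p" for x using z1[OF that(2)] that(1) by linarith
  have z2': "1 \<le> (a2 * x) mod p" if "1 \<le> x" "x < p" for x using z2[OF that(2)] that(1) by linarith
  have i1: "\<sigma> ` S1 \<subseteq> S1" unfolding S1_def by (simp add: sig)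
  have i2: "\<sigma> ` S2 \<subseteq> S2" unfolding S2_def using z1' p0 by (auto simp: sig)
  have i3: "\<sigma> ` S3 \<subseteq> S3" unfolding S3_def using z2' p0 by (auto simp: sig)
  have i4: "\<sigma> ` S4 \<subseteq> S4" unfolding S4_def using z1' z2' p0 by (auto simp: sig)
  have sub: "S1 \<subseteq> B" "S2 \<subseteq> B" "S3 \<subseteq> B" "S4 \<subseteq> B" using BU by auto
  have l2: "card (cyc_orbit \<sigma> z) = d1" if "z \<in> S2" for z
    using that permon.card_orbit_eqI[OF pm, of z d1] fixed sub unfolding S2_def by auto
  have l3: "card (cyc_orbit \<sigma> z) = d2" if "z \<in> S3" for z
    using that permon.card_orbit_eqI[OF pm, of z d2] fixed sub unfolding S3_def by auto
  have l4: "card (cyc_orbit \<sigma> z) = lcm d1 d2" if "z \<in> S4" for z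
    using that permon.card_orbit_eqI[OF pm, of z "lcm d1 d2"] fixed sub unfolding S4_def by auto
  have c1: "cycle_type \<sigma> S1 = {#1#}" unfolding S1_def by (rule ct_fixpt) (simp add: sig)
  have c2: "cycle_type \<sigma> S2 = replicate_mset ((p - 1) div d1) d1"
    using ct_piece[OF pm sub(2) i2 l2] by (simp add: S2_def)
  have c3: "cycle_type \<sigma> S3 = replicate_mset ((p - 1) div d2) d2"
    using ct_piece[OF pm sub(3) i3 l3] by (simp add: S3_def)
  have c4: "cycle_type \<sigma> S4 = replicate_mset ((p - 1) ^ 2 div lcm d1 d2) (lcm d1 d2)"
    using ct_piece[OF pm sub(4) i4 l4] by (simp add: S4_def power2_eq_square)
  have "cycle_type \<sigma> B = cycle_type \<sigma> S1 + cycle_type \<sigma> S2 + cycle_type \<sigma> S3 + cycle_type \<sigma> S4"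
    unfolding BU by (rule ct_union4) (use i1 i2 i3 i4 in \<open>auto simp: S1_def S2_def S3_def S4_def\<close>)
  then have "cycle_type \<sigma> B = replicate_mset ((p - 1) ^ 2 div lcm d1 d2) (lcm d1 d2)
                       + replicate_mset ((p - 1) div d1) d1
                       + replicate_mset ((p - 1) div d2) d2 + {#1#}"
    using c1 c2 c3 c4 by (simp add: add_ac)
  then show ?thesis using hom pm unfolding B_def by blast
qed

theorem bwd_b:
  assumes pr: "Factorial_Ring.prime p" and d: "d > 0" "d dvd p - 1"
  shows "\<exists>\<sigma>. \<sigma> \<in> hom (Zp2 p) (Zp2 p) \<and> permon \<sigma> (carrier (Zp2 p)) \<and>
    cycle_type \<sigma> (carrier (Zp2 p)) = replicate_mset ((p - 1) div d) (p * d)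
                       + replicate_mset ((p - 1) div d) d + {#1#}"
proof -
  have p0: "p > 0" using pr prime_gt_0_nat by blast
  obtain a where a: "coprime p a" "ord p a = d" using exists_ord[OF pr d(2,1)] by blast
  have pa: "\<not> p dvd a"
  proof
    assume "p dvd a"
    then have "p = 1" using coprime_common_divisor_nat[OF a(1) dvd_refl] by simp
    then show False using pr by simp
  qed
  have cpd: "coprime p d"
  proof (rule prime_imp_coprime[OF pr])
    have "p \<ge> 2" using pr prime_ge_2_nat by blast
    then have "d \<le> p - 1" using d by (simp add: dvd_imp_le)
    then show "\<not> p dvd d" using d by (auto dest: dvd_imp_le)
  qed
  define \<sigma> where "\<sigma> = lin p a 1 0 a"
  define B where "B = carrier (Zp2 p)"
  have B: "B = {..<p} \<times> {..<p}" unfolding B_def Zp2_def by simp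
  have hom: "\<sigma> \<in> hom (Zp2 p) (Zp2 p)" unfolding \<sigma>_def by (rule lin_hom[OF p0])
  have sig: "\<sigma> (x, y) = ((a * x + y) mod p, (a * y) mod p)" for x y unfolding \<sigma>_def lin_def by simp
  have iter: "(\<sigma> ^^ n) (x, y) = ((a ^ n * x + n * a ^ (n - 1) * y) mod p, (a ^ n * y) mod p)"
    if "x < p" "y < p" for n x y
  proof (induction n)
    case 0 then show ?case using that by simp
  next
    case (Suc n)
    have e: "a * (a ^ n * x + n * a ^ (n - 1) * y) + a ^ n * y = a ^ Suc n * x + Suc n * a ^ n * y"
    proof (cases n)
      case 0 then show ?thesis by simp
    next
      case (Suc k) then show ?thesis by (simp add: algebra_simps)
    qed
    have "(\<sigma> ^^ Suc n) (x, y) = ((a * ((a ^ n * x + n * a ^ (n - 1) * y) mod p) + (a ^ n * y) mod p) mod p,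
        (a * ((a ^ n * y) mod p)) mod p)" using Suc by (simp add: sig)
    also have "\<dots> = ((a * (a ^ n * x + n * a ^ (n - 1) * y) + a ^ n * y) mod p, (a * (a ^ n * y)) mod p)"
    proof -
      have m: "(a * (U mod p) + V mod p) mod p = (a * U + V) mod p" for U V
        using modlin[of a U p 1 V] by simp
      show ?thesis by (simp only: m mod_mult_right_eq)
    qed
    also have "\<dots> = ((a ^ Suc n * x + Suc n * a ^ (Suc n - 1) * y) mod p, (a ^ Suc n * y) mod p)"
      using e by (simp add: mult.assoc)
    finally show ?case .
  qed
  have fixed0: "(\<sigma> ^^ n) (x, 0) = (x, 0) \<longleftrightarrow> (x = 0 \<or> d dvd n)" if "x < p" for n x
    using iter[OF that p0, of n] fix1[OF pr that, of a n] a by simp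
  have fixed1: "(\<sigma> ^^ n) (x, y) = (x, y) \<longleftrightarrow> p * d dvd n" if xy: "x < p" "y < p" "y \<noteq> 0" for n x y
  proof -
    have "(\<sigma> ^^ n) (x, y) = (x, y) \<longleftrightarrow>
        (a ^ n * x + n * a ^ (n - 1) * y) mod p = x \<and> (a ^ n * y) mod p = y"
      using iter[OF xy(1,2), of n] by simp
    also have "\<dots> \<longleftrightarrow> d dvd n \<and> p dvd n"
    proof (cases "d dvd n")
      case False
      then show ?thesis using fix1[OF pr xy(2), of a n] a xy(3) by simp
    next
      case True
      then have y: "(a ^ n * y) mod p = y" using fix1[OF pr xy(2), of a n] a by simp
      have ax: "(a ^ n * x) mod p = x" using fix1[OF pr xy(1), of a n] a True by simp
      have "(a ^ n * x + n * a ^ (n - 1) * y) mod p = (x + n * a ^ (n - 1) * y) mod p"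
        using ax mod_add_left_eq[of "a ^ n * x" p "n * a ^ (n - 1) * y"] by simp
      then have "(a ^ n * x + n * a ^ (n - 1) * y) mod p = x \<longleftrightarrow> [x + n * a ^ (n - 1) * y = x] (mod p)"
        using xy(1) by (simp add: cong_def)
      also have "\<dots> \<longleftrightarrow> p dvd n * a ^ (n - 1) * y"
        by (simp add: cong_add_lcancel_0_nat cong_0_iff)
      also have "\<dots> \<longleftrightarrow> p dvd n"
      proof -
        have "\<not> p dvd a ^ (n - 1)"
        proof (cases "n - 1 = 0")
          case True then show ?thesis using pr prime_ge_2_nat[OF pr] by simp
        next
          case False then show ?thesis using prime_dvd_power_iff[OF pr] pa by simp
        qed
        moreover have "\<not> p dvd y" using xy by (auto dest: dvd_imp_le)
        ultimately show ?thesis using prime_dvd_mult_iff[OF pr] by simp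
      qed
      finally show ?thesis using y True by simp
    qed
    also have "\<dots> \<longleftrightarrow> p * d dvd n"
      using divides_mult[OF _ _ cpd] by (auto intro: dvd_mult_left dvd_mult_right)
    finally show ?thesis .
  qed
  have closed: "\<sigma> ` B \<subseteq> B" unfolding B_def using hom by (auto simp: hom_in_carrier)
  have "\<forall>z\<in>B. (\<sigma> ^^ (p * d)) z = z"
  proof
    fix z assume "z \<in> B"
    then obtain x y where xy: "z = (x, y)" "x < p" "y < p" using B by auto
    show "(\<sigma> ^^ (p * d)) z = z"
    proof (cases "y = 0")
      case True then show ?thesis using fixed0[OF xy(2), of "p * d"] xy by simp
    next
      case False then show ?thesis using fixed1[OF xy(2,3) False, of "p * d"] xy by simp
    qed
  qed
  then have inj: "inj_on \<sigma> B" by (rule inj_from_period) (use d p0 in simp)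
  have finB: "finite B" using B by simp
  have pm: "permon \<sigma> B" using finB closed inj by unfold_locales
  define S1 where "S1 = {(0::nat, 0::nat)}"
  define S2 where "S2 = {1..<p} \<times> {0::nat}"
  define S3 where "S3 = {..<p} \<times> {1..<p}"
  have BU: "B = S1 \<union> S2 \<union> S3 \<union> {}" unfolding B S1_def S2_def S3_def using p0 by auto
  have z1: "(a * x) mod p = 0 \<longleftrightarrow> x = 0" if "x < p" for x using mod_mult_zero[OF pr that a(1)] .
  have z1': "1 \<le> (a * x) mod p" if "1 \<le> x" "x < p" for x using z1[OF that(2)] that(1) by linarith
  have i1: "\<sigma> ` S1 \<subseteq> S1" unfolding S1_def by (simp add: sig)
  have i2: "\<sigma> ` S2 \<subseteq> S2" unfolding S2_def using z1' p0 by (auto simp: sig)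
  have i3: "\<sigma> ` S3 \<subseteq> S3" unfolding S3_def using z1' p0 by (auto simp: sig)
  have sub: "S1 \<subseteq> B" "S2 \<subseteq> B" "S3 \<subseteq> B" using BU by auto
  have l2: "card (cyc_orbit \<sigma> z) = d" if "z \<in> S2" for z
    using that permon.card_orbit_eqI[OF pm, of z d] fixed0 sub unfolding S2_def by auto
  have l3: "card (cyc_orbit \<sigma> z) = p * d" if "z \<in> S3" for z
    using that permon.card_orbit_eqI[OF pm, of z "p * d"] fixed1 sub unfolding S3_def by auto
  have c1: "cycle_type \<sigma> S1 = {#1#}" unfolding S1_def by (rule ct_fixpt) (simp add: sig)
  have c2: "cycle_type \<sigma> S2 = replicate_mset ((p - 1) div d) d"
    using ct_piece[OF pm sub(2) i2 l2] by (simp add: S2_def)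
  have "card S3 = p * (p - 1)" unfolding S3_def by simp
  then have c3: "cycle_type \<sigma> S3 = replicate_mset ((p - 1) div d) (p * d)"
    using ct_piece[OF pm sub(3) i3 l3] p0 by simp
  have "cycle_type \<sigma> B = cycle_type \<sigma> S1 + cycle_type \<sigma> S2 + cycle_type \<sigma> S3 + cycle_type \<sigma> {}"
    unfolding BU by (rule ct_union4) (use i1 i2 i3 in \<open>auto simp: S1_def S2_def S3_def\<close>)
  then have "cycle_type \<sigma> B = replicate_mset ((p - 1) div d) (p * d)
                       + replicate_mset ((p - 1) div d) d + {#1#}"
    using c1 c2 c3 by (simp add: add_ac cycle_type_def[of _ "{}"])
  then show ?thesis using hom pm unfolding B_def by blast
qed

definition qext :: "('a, 'b) ring_scheme \<Rightarrow> 'a \<Rightarrow> ('a \<times> 'a) ring" where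
  "qext F s = \<lparr>carrier = carrier F \<times> carrier F,
     monoid.mult = (\<lambda>u v. (fst u \<otimes>\<^bsub>F\<^esub> fst v \<oplus>\<^bsub>F\<^esub> s \<otimes>\<^bsub>F\<^esub> (snd u \<otimes>\<^bsub>F\<^esub> snd v),
                           fst u \<otimes>\<^bsub>F\<^esub> snd v \<oplus>\<^bsub>F\<^esub> snd u \<otimes>\<^bsub>F\<^esub> fst v \<oplus>\<^bsub>F\<^esub> snd u \<otimes>\<^bsub>F\<^esub> snd v)),
     one = (\<one>\<^bsub>F\<^esub>, \<zero>\<^bsub>F\<^esub>),
     ring.zero = (\<zero>\<^bsub>F\<^esub>, \<zero>\<^bsub>F\<^esub>),
     ring.add = (\<lambda>u v. (fst u \<oplus>\<^bsub>F\<^esub> fst v, snd u \<oplus>\<^bsub>F\<^esub> snd v))\<rparr>"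

context field
begin

lemma qext_cring: assumes s: "s \<in> carrier R" shows "cring (qext R s)"
proof (rule cringI)
  show "abelian_group (qext R s)"
  proof (rule abelian_groupI)
    fix x y z assume "x \<in> carrier (qext R s)" "y \<in> carrier (qext R s)" "z \<in> carrier (qext R s)"
    then show "x \<oplus>\<^bsub>qext R s\<^esub> y \<oplus>\<^bsub>qext R s\<^esub> z = x \<oplus>\<^bsub>qext R s\<^esub> (y \<oplus>\<^bsub>qext R s\<^esub> z)"
      by (auto simp: qext_def a_assoc)
  next
    fix x y assume "x \<in> carrier (qext R s)" "y \<in> carrier (qext R s)"
    then show "x \<oplus>\<^bsub>qext R s\<^esub> y \<in> carrier (qext R s)" "x \<oplus>\<^bsub>qext R s\<^esub> y = y \<oplus>\<^bsub>qext R s\<^esub> x"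
      by (auto simp: qext_def a_comm)
  next
    show "\<zero>\<^bsub>qext R s\<^esub> \<in> carrier (qext R s)" by (simp add: qext_def)
  next
    fix x assume "x \<in> carrier (qext R s)"
    then show "\<zero>\<^bsub>qext R s\<^esub> \<oplus>\<^bsub>qext R s\<^esub> x = x" by (auto simp: qext_def)
  next
    fix x assume x: "x \<in> carrier (qext R s)"
    show "\<exists>y\<in>carrier (qext R s). y \<oplus>\<^bsub>qext R s\<^esub> x = \<zero>\<^bsub>qext R s\<^esub>"
      using x by (intro bexI[of _ "(\<ominus> fst x, \<ominus> snd x)"]) (auto simp: qext_def l_neg)
  qed
next
  show "comm_monoid (qext R s)"
  proof (rule comm_monoidI)
    fix x y z assume xyz: "x \<in> carrier (qext R s)" "y \<in> carrier (qext R s)" "z \<in> carrier (qext R s)"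
    obtain a b where x: "x = (a, b)" "a \<in> carrier R" "b \<in> carrier R" using xyz by (cases x) (auto simp: qext_def)
    obtain c d where y: "y = (c, d)" "c \<in> carrier R" "d \<in> carrier R" using xyz by (cases y) (auto simp: qext_def)
    obtain e g where z: "z = (e, g)" "e \<in> carrier R" "g \<in> carrier R" using xyz by (cases z) (auto simp: qext_def)
    have 1: "(a \<otimes> c \<oplus> s \<otimes> (b \<otimes> d)) \<otimes> e \<oplus> s \<otimes> ((a \<otimes> d \<oplus> b \<otimes> c \<oplus> b \<otimes> d) \<otimes> g)
       = a \<otimes> (c \<otimes> e \<oplus> s \<otimes> (d \<otimes> g)) \<oplus> s \<otimes> (b \<otimes> (c \<otimes> g \<oplus> d \<otimes> e \<oplus> d \<otimes> g))"
      using x y z s by algebra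
    have 2: "(a \<otimes> c \<oplus> s \<otimes> (b \<otimes> d)) \<otimes> g \<oplus> (a \<otimes> d \<oplus> b \<otimes> c \<oplus> b \<otimes> d) \<otimes> e \<oplus> (a \<otimes> d \<oplus> b \<otimes> c \<oplus> b \<otimes> d) \<otimes> g
       = a \<otimes> (c \<otimes> g \<oplus> d \<otimes> e \<oplus> d \<otimes> g) \<oplus> b \<otimes> (c \<otimes> e \<oplus> s \<otimes> (d \<otimes> g)) \<oplus> b \<otimes> (c \<otimes> g \<oplus> d \<otimes> e \<oplus> d \<otimes> g)"
      using x y z s by algebra
    show "x \<otimes>\<^bsub>qext R s\<^esub> y \<otimes>\<^bsub>qext R s\<^esub> z = x \<otimes>\<^bsub>qext R s\<^esub> (y \<otimes>\<^bsub>qext R s\<^esub> z)"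
      using 1 2 x y z by (simp add: qext_def)
    have 3: "a \<otimes> c \<oplus> s \<otimes> (b \<otimes> d) = c \<otimes> a \<oplus> s \<otimes> (d \<otimes> b)" using x y s by algebra
    have 4: "a \<otimes> d \<oplus> b \<otimes> c \<oplus> b \<otimes> d = c \<otimes> b \<oplus> d \<otimes> a \<oplus> d \<otimes> b" using x y s by algebra
    show "x \<otimes>\<^bsub>qext R s\<^esub> y = y \<otimes>\<^bsub>qext R s\<^esub> x" using 3 4 x y by (simp add: qext_def)
  next
    fix x y assume "x \<in> carrier (qext R s)" "y \<in> carrier (qext R s)"
    then show "x \<otimes>\<^bsub>qext R s\<^esub> y \<in> carrier (qext R s)" using s by (auto simp: qext_def)
  next
    show "\<one>\<^bsub>qext R s\<^esub> \<in> carrier (qext R s)" by (simp add: qext_def)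
  next
    fix x assume "x \<in> carrier (qext R s)"
    then show "\<one>\<^bsub>qext R s\<^esub> \<otimes>\<^bsub>qext R s\<^esub> x = x" using s by (auto simp: qext_def)
  qed
next
  fix x y z assume xyz: "x \<in> carrier (qext R s)" "y \<in> carrier (qext R s)" "z \<in> carrier (qext R s)"
  obtain a b where x: "x = (a, b)" "a \<in> carrier R" "b \<in> carrier R" using xyz by (cases x) (auto simp: qext_def)
  obtain c d where y: "y = (c, d)" "c \<in> carrier R" "d \<in> carrier R" using xyz by (cases y) (auto simp: qext_def)
  obtain e g where z: "z = (e, g)" "e \<in> carrier R" "g \<in> carrier R" using xyz by (cases z) (auto simp: qext_def)
  have 1: "(a \<oplus> c) \<otimes> e \<oplus> s \<otimes> ((b \<oplus> d) \<otimes> g) = (a \<otimes> e \<oplus> s \<otimes> (b \<otimes> g)) \<oplus> (c \<otimes> e \<oplus> s \<otimes> (d \<otimes> g))"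
    using x y z s by algebra
  have 2: "(a \<oplus> c) \<otimes> g \<oplus> (b \<oplus> d) \<otimes> e \<oplus> (b \<oplus> d) \<otimes> g
     = (a \<otimes> g \<oplus> b \<otimes> e \<oplus> b \<otimes> g) \<oplus> (c \<otimes> g \<oplus> d \<otimes> e \<oplus> d \<otimes> g)"
    using x y z s by algebra
  show "(x \<oplus>\<^bsub>qext R s\<^esub> y) \<otimes>\<^bsub>qext R s\<^esub> z = x \<otimes>\<^bsub>qext R s\<^esub> z \<oplus>\<^bsub>qext R s\<^esub> y \<otimes>\<^bsub>qext R s\<^esub> z"
    using 1 2 x y z by (simp add: qext_def)
qed

lemma qext_field:
  assumes s: "s \<in> carrier R" and nr: "\<And>x. x \<in> carrier R \<Longrightarrow> x \<otimes> x \<ominus> x \<noteq> s"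
  shows "field (qext R s)"
proof -
  interpret E: cring "qext R s" by (rule qext_cring[OF s])
  show ?thesis
  proof (rule E.cring_fieldI2)
    show "\<zero>\<^bsub>qext R s\<^esub> \<noteq> \<one>\<^bsub>qext R s\<^esub>" by (simp add: qext_def)
  next
    fix x assume xc: "x \<in> carrier (qext R s)" and x0: "x \<noteq> \<zero>\<^bsub>qext R s\<^esub>"
    obtain a b where x: "x = (a, b)" "a \<in> carrier R" "b \<in> carrier R" using xc by (cases x) (auto simp: qext_def)
    have ab: "a \<noteq> \<zero> \<or> b \<noteq> \<zero>" using x0 x by (auto simp: qext_def)
    define N where "N = a \<otimes> a \<oplus> a \<otimes> b \<ominus> s \<otimes> (b \<otimes> b)"
    have Nc: "N \<in> carrier R" unfolding N_def using x s by simp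
    have N0: "N \<noteq> \<zero>"
    proof (cases "b = \<zero>")
      case True
      then have "N = a \<otimes> a \<oplus> a \<otimes> \<zero> \<ominus> s \<otimes> (\<zero> \<otimes> \<zero>)" unfolding N_def by simp
      also have "\<dots> = a \<otimes> a" using x s by algebra
      finally have "N = a \<otimes> a" .
      moreover have "a \<noteq> \<zero>" using ab True by simp
      ultimately show ?thesis using x integral_iff by simp
    next
      case False
      then have bU: "b \<in> Units R" using x field_Units by blast
      define bi where "bi = inv b"
      have bic: "bi \<in> carrier R" "bi \<otimes> b = \<one>" using bU unfolding bi_def by auto
      define x0 where "x0 = \<ominus> (a \<otimes> bi)"
      have x0c: "x0 \<in> carrier R" unfolding x0_def using x bic by simp
      have "x0 \<otimes> b = \<ominus> (a \<otimes> (bi \<otimes> b))" unfolding x0_def using x bic by algebra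
      then have xb: "x0 \<otimes> b = \<ominus> a" using bic x by simp
      have "(b \<otimes> b) \<otimes> (x0 \<otimes> x0 \<ominus> x0 \<ominus> s) = (x0 \<otimes> b) \<otimes> (x0 \<otimes> b) \<ominus> (x0 \<otimes> b) \<otimes> b \<ominus> s \<otimes> (b \<otimes> b)"
        using x x0c s by algebra
      also have "\<dots> = (\<ominus> a) \<otimes> (\<ominus> a) \<ominus> (\<ominus> a) \<otimes> b \<ominus> s \<otimes> (b \<otimes> b)" using xb by simp
      also have "\<dots> = N" unfolding N_def using x s by algebra
      finally have eq: "(b \<otimes> b) \<otimes> (x0 \<otimes> x0 \<ominus> x0 \<ominus> s) = N" .
      show ?thesis
      proof
        assume "N = \<zero>"
        moreover have "b \<otimes> b \<noteq> \<zero>" using False x integral_iff by simp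
        ultimately have "x0 \<otimes> x0 \<ominus> x0 \<ominus> s = \<zero>" using eq integral_iff x x0c s by simp
        then have "x0 \<otimes> x0 \<ominus> x0 = s" using x0c s r_right_minus_eq by simp
        then show False using nr x0c by blast
      qed
    qed
    then have NU: "N \<in> Units R" using Nc field_Units by blast
    define Ni where "Ni = inv N"
    have Nic: "Ni \<in> carrier R" "Ni \<otimes> N = \<one>" using NU unfolding Ni_def by auto
    define y where "y = (Ni \<otimes> (a \<oplus> b), Ni \<otimes> (\<ominus> b))"
    have yc: "y \<in> carrier (qext R s)" unfolding y_def using Nic x by (simp add: qext_def)
    have 1: "a \<otimes> (Ni \<otimes> (a \<oplus> b)) \<oplus> s \<otimes> (b \<otimes> (Ni \<otimes> (\<ominus> b))) = Ni \<otimes> N"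
      unfolding N_def using x s Nic by algebra
    have 2: "a \<otimes> (Ni \<otimes> (\<ominus> b)) \<oplus> b \<otimes> (Ni \<otimes> (a \<oplus> b)) \<oplus> b \<otimes> (Ni \<otimes> (\<ominus> b)) = \<zero>"
      using x s Nic by algebra
    have "x \<otimes>\<^bsub>qext R s\<^esub> y = \<one>\<^bsub>qext R s\<^esub>"
      using 1 2 Nic x unfolding y_def by (simp add: qext_def)
    then show "\<exists>y\<in>carrier (qext R s). x \<otimes>\<^bsub>qext R s\<^esub> y = \<one>\<^bsub>qext R s\<^esub>" using yc by blast
  qed
qed

lemma exists_nonroot:
  assumes fin: "finite (carrier R)"
  shows "\<exists>s\<in>carrier R. \<forall>x\<in>carrier R. x \<otimes> x \<ominus> x \<noteq> s"
proof -
  define \<psi> where "\<psi> = (\<lambda>x. x \<otimes> x \<ominus> x)"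
  have sub: "\<psi> ` carrier R \<subseteq> carrier R" unfolding \<psi>_def by auto
  have "\<psi> \<zero> = \<psi> \<one>" unfolding \<psi>_def by algebra
  then have "\<not> inj_on \<psi> (carrier R)" unfolding inj_on_def using zero_not_one by blast
  then have "card (\<psi> ` carrier R) \<noteq> card (carrier R)" using eq_card_imp_inj_on[OF fin] by blast
  then have "\<psi> ` carrier R \<noteq> carrier R" by metis
  then obtain s where "s \<in> carrier R" "s \<notin> \<psi> ` carrier R" using sub by blast
  then show ?thesis unfolding \<psi>_def by (intro bexI[of _ s]) auto
qed

end

lemma finite_field_p2:
  assumes pr: "Factorial_Ring.prime p"
  shows "\<exists>E :: (int \<times> int) ring. field E \<and> finite (carrier E) \<and> card (carrier E) = p ^ 2"
proof -
  have rp: "residues_prime p" using pr by unfold_locales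
  have fF: "field (residue_ring (int p))" using residues_prime.is_field[OF rp] .
  have cF: "carrier (residue_ring (int p)) = {0..int p - 1}" by (simp add: residue_ring_def)
  have cardF: "card (carrier (residue_ring (int p))) = p" unfolding cF by simp
  have finF: "finite (carrier (residue_ring (int p)))" unfolding cF by simp
  obtain s where s: "s \<in> carrier (residue_ring (int p))"
    "\<forall>x\<in>carrier (residue_ring (int p)). x \<otimes>\<^bsub>residue_ring (int p)\<^esub> x \<ominus>\<^bsub>residue_ring (int p)\<^esub> x \<noteq> s"
    using field.exists_nonroot[OF fF finF] by blast
  have "field (qext (residue_ring (int p)) s)" using field.qext_field[OF fF s(1)] s(2) by blast
  moreover have "carrier (qext (residue_ring (int p)) s) = carrier (residue_ring (int p)) \<times> carrier (residue_ring (int p))"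
    by (simp add: qext_def)
  ultimately show ?thesis using cardF finF
    by (intro exI[of _ "qext (residue_ring (int p)) s"]) (simp add: card_cartesian_product power2_eq_square)
qed

theorem bwd_a:
  fixes f :: "'a \<Rightarrow> 'a" and A :: "'a set"
  assumes pr: "Factorial_Ring.prime p" and d: "d > 0" "d dvd p ^ 2 - 1"
    and f: "bij_betw f A A" "finite A"
    and ct: "cycle_type f A = replicate_mset ((p ^ 2 - 1) div d) d + {#1#}"
  shows "\<exists>G::'a monoid. carrier G = A \<and> comm_group G \<and> f \<in> iso G G"
proof -
  obtain E :: "(int \<times> int) ring" where E: "field E" "finite (carrier E)" "card (carrier E) = p ^ 2"
    using finite_field_p2[OF pr] by blast
  interpret E: field E by (rule E(1))
  interpret M: group "Multiplicative_Group.mult_of E" by (rule E.field_mult_group)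
  have p2: "p \<ge> 2" using pr prime_ge_2_nat by blast
  define N where "N = p ^ 2 - 1"
  have finM: "finite (carrier (Multiplicative_Group.mult_of E))" using E(2) by simp
  have cardM: "card (carrier (Multiplicative_Group.mult_of E)) = N" unfolding N_def using E(2,3) by (simp add: card_Diff_singleton)
  obtain a where a: "a \<in> carrier (Multiplicative_Group.mult_of E)" "carrier (Multiplicative_Group.mult_of E) = {a [^]\<^bsub>E\<^esub> i | i::nat. i \<in> UNIV}"
    using E.finite_field_mult_group_has_gen[OF E(2)] by blast
  have pw: "x [^]\<^bsub>Multiplicative_Group.mult_of E\<^esub> (k::nat) = x [^]\<^bsub>E\<^esub> k" for x k
    by (induction k) simp_all
  have ordA: "M.ord a = N"
  proof -
    have "M.ord a = card (generate (Multiplicative_Group.mult_of E) {a})" using M.generate_pow_card[OF a(1)] .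
    also have "generate (Multiplicative_Group.mult_of E) {a} = {a [^]\<^bsub>Multiplicative_Group.mult_of E\<^esub> k | k. k \<in> (UNIV :: nat set)}"
      using M.generate_pow_on_finite_carrier[OF finM a(1)] .
    also have "\<dots> = carrier (Multiplicative_Group.mult_of E)" using a(2) by (simp add: pw)
    finally show ?thesis using cardM by simp
  qed
  have "p * p \<ge> 2 * 2" using p2 mult_le_mono by blast
  then have N0: "N > 0" unfolding N_def by (simp add: power2_eq_square)
  define k where "k = N div d"
  obtain q where q: "N = d * q" using d(2) N_def by blast
  have kq: "k = q" unfolding k_def q using d(1) by simp
  have k0: "k > 0" using kq q N0 by (cases q) auto
  have kN: "k dvd N" using kq q by simp
  define u where "u = a [^]\<^bsub>Multiplicative_Group.mult_of E\<^esub> k"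
  have uM: "u \<in> carrier (Multiplicative_Group.mult_of E)" unfolding u_def by (rule M.nat_pow_closed[OF a(1)])
  have ordu: "M.ord u = d"
  proof -
    have "M.ord u = N div gcd N k" unfolding u_def using M.ord_pow_gen[OF a(1), of k] ordA k0 by simp
    also have "gcd N k = k" using kN by (simp add: gcd.commute gcd_nat.absorb1)
    also have "N div k = d" using kq q k0 by simp
    finally show ?thesis .
  qed
  have uc: "u \<in> carrier E" "u \<noteq> \<zero>\<^bsub>E\<^esub>" using uM by auto
  have upow: "u [^]\<^bsub>E\<^esub> n = \<one>\<^bsub>E\<^esub> \<longleftrightarrow> d dvd n" for n :: nat
    using M.pow_eq_id[OF uM, of n] ordu by (simp add: pw)
  define \<sigma> where "\<sigma> = (\<lambda>x. u \<otimes>\<^bsub>E\<^esub> x)"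
  define H where "H = add_monoid E"
  have cH: "carrier H = carrier E" unfolding H_def by simp
  have cgH: "comm_group H" unfolding H_def by (rule E.a_comm_group)
  have hom: "\<sigma> \<in> hom H H"
  proof (rule homI)
    fix x assume "x \<in> carrier H" then show "\<sigma> x \<in> carrier H" using uc cH unfolding \<sigma>_def by simp
  next
    fix x y assume "x \<in> carrier H" "y \<in> carrier H"
    then show "\<sigma> (x \<otimes>\<^bsub>H\<^esub> y) = \<sigma> x \<otimes>\<^bsub>H\<^esub> \<sigma> y" using uc cH unfolding \<sigma>_def H_def by (simp add: E.r_distr)
  qed
  have iter: "(\<sigma> ^^ n) x = u [^]\<^bsub>E\<^esub> n \<otimes>\<^bsub>E\<^esub> x" if x: "x \<in> carrier E" for n x
  proof (induction n)
    case 0 then show ?case using x by simp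
  next
    case (Suc n)
    have "u \<otimes>\<^bsub>E\<^esub> (u [^]\<^bsub>E\<^esub> n \<otimes>\<^bsub>E\<^esub> x) = u [^]\<^bsub>E\<^esub> Suc n \<otimes>\<^bsub>E\<^esub> x"
      using x uc by (simp add: E.m_ac)
    then show ?case using Suc unfolding \<sigma>_def by simp
  qed
  have fixd: "(\<sigma> ^^ n) x = x \<longleftrightarrow> d dvd n" if x: "x \<in> carrier E" "x \<noteq> \<zero>\<^bsub>E\<^esub>" for n x
  proof -
    have "(\<sigma> ^^ n) x = x \<longleftrightarrow> u [^]\<^bsub>E\<^esub> n \<otimes>\<^bsub>E\<^esub> x = \<one>\<^bsub>E\<^esub> \<otimes>\<^bsub>E\<^esub> x" using iter x by simp
    also have "\<dots> \<longleftrightarrow> u [^]\<^bsub>E\<^esub> n = \<one>\<^bsub>E\<^esub>" using E.m_rcancel[OF x(2) x(1)] uc by simp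
    finally show ?thesis using upow by simp
  qed
  have sig0: "\<sigma> \<zero>\<^bsub>E\<^esub> = \<zero>\<^bsub>E\<^esub>" unfolding \<sigma>_def using uc by simp
  have closed: "\<sigma> ` carrier E \<subseteq> carrier E" unfolding \<sigma>_def using uc by auto
  have "\<forall>z\<in>carrier E. (\<sigma> ^^ d) z = z"
  proof
    fix z assume z: "z \<in> carrier E"
    show "(\<sigma> ^^ d) z = z"
    proof (cases "z = \<zero>\<^bsub>E\<^esub>")
      case True
      have "(\<sigma> ^^ n) \<zero>\<^bsub>E\<^esub> = \<zero>\<^bsub>E\<^esub>" for n by (induction n) (simp_all add: sig0)
      then show ?thesis using True by simp
    next
      case False then show ?thesis using fixd z by simp
    qed
  qed
  then have inj: "inj_on \<sigma> (carrier E)" by (rule inj_from_period) (use d in simp)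
  have pm: "permon \<sigma> (carrier E)" using E(2) closed inj by unfold_locales
  define S2 where "S2 = carrier E - {\<zero>\<^bsub>E\<^esub>}"
  have i1: "\<sigma> ` {\<zero>\<^bsub>E\<^esub>} \<subseteq> {\<zero>\<^bsub>E\<^esub>}" using sig0 by simp
  have i2: "\<sigma> ` S2 \<subseteq> S2"
  proof
    fix y assume "y \<in> \<sigma> ` S2"
    then obtain z where z: "z \<in> carrier E" "z \<noteq> \<zero>\<^bsub>E\<^esub>" "y = u \<otimes>\<^bsub>E\<^esub> z" unfolding S2_def \<sigma>_def by blast
    have "u \<otimes>\<^bsub>E\<^esub> z \<noteq> \<zero>\<^bsub>E\<^esub>" using E.integral_iff[OF uc(1) z(1)] uc z by simp
    then show "y \<in> S2" unfolding S2_def using z uc by simp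
  qed
  have l2: "card (cyc_orbit \<sigma> z) = d" if "z \<in> S2" for z
    using that permon.card_orbit_eqI[OF pm, of z d] fixd unfolding S2_def by auto
  have c2: "cycle_type \<sigma> S2 = replicate_mset (N div d) d"
    using ct_piece[OF pm _ i2 l2] E(2,3) unfolding S2_def N_def by (simp add: card_Diff_singleton)
  have BU: "carrier E = {\<zero>\<^bsub>E\<^esub>} \<union> S2 \<union> {} \<union> {}" unfolding S2_def by auto
  have "cycle_type \<sigma> (carrier E) = cycle_type \<sigma> {\<zero>\<^bsub>E\<^esub>} + cycle_type \<sigma> S2 + cycle_type \<sigma> {} + cycle_type \<sigma> {}"
    by (subst BU, rule ct_union4) (use i1 i2 E(2) in \<open>auto simp: S2_def\<close>)
  then have "cycle_type \<sigma> (carrier E) = replicate_mset (N div d) d + {#1#}"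
    using c2 ct_fixpt[of \<sigma> "\<zero>\<^bsub>E\<^esub>", OF sig0] by (simp add: cycle_type_def[of _ "{}"])
  then have "cycle_type \<sigma> (carrier H) = cycle_type f A" using ct cH N_def by simp
  then show ?thesis using realize[OF cgH hom _ _ f] pm cH by simp
qed

theorem theorem2p7:
  fixes p :: nat and A :: "'a set" and f :: "'a \<Rightarrow> 'a"
  assumes "Factorial_Ring.prime p" and "finite A" and "card A = p ^ 2" and "bij_betw f A A"
  shows "(\<exists>G :: 'a monoid. carrier G = A \<and> comm_group G \<and> f \<in> iso G G) \<longleftrightarrow>
    ((\<forall>x\<in>A. f x = x) \<or>
     (\<exists>d. d > 0 \<and> d dvd p ^ 2 - 1 \<and>
        cycle_type f A = replicate_mset ((p ^ 2 - 1) div d) d + {#1#}) \<or>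
     (\<exists>d. d > 0 \<and> d dvd p - 1 \<and>
        cycle_type f A = replicate_mset ((p - 1) div d) (p * d)
                       + replicate_mset ((p - 1) div d) d + {#1#}) \<or>
     (\<exists>d1 d2. d1 > 0 \<and> d2 > 0 \<and> d1 dvd p - 1 \<and> d2 dvd p - 1 \<and>
        cycle_type f A = replicate_mset ((p - 1) ^ 2 div lcm d1 d2) (lcm d1 d2)
                       + replicate_mset ((p - 1) div d1) d1
                       + replicate_mset ((p - 1) div d2) d2 + {#1#}))"
    (is "?L \<longleftrightarrow> ?id \<or> ?a \<or> ?b \<or> ?c")
proof
  assume ?L
  then obtain G :: "'a monoid" where G: "carrier G = A" "comm_group G" "f \<in> iso G G" by blast
  interpret comm_group G by (rule G(2))
  interpret fwd G f p by unfold_locales (use G assms in auto)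
  show "?id \<or> ?a \<or> ?b \<or> ?c" using fwd_main G(1) by blast
next
  have pm: "permon f A" using assms(2,4) by unfold_locales (auto simp: bij_betw_def)
  have p0: "p > 0" using assms(1) prime_gt_0_nat by blast
  assume "?id \<or> ?a \<or> ?b \<or> ?c"
  moreover have ?a if ?id
  proof -
    have "card (cyc_orbit f x) = 1" if "x \<in> A" for x
    proof (rule permon.card_orbit_eqI[OF pm that])
      fix n
      have "(f ^^ n) x = x" using \<open>?id\<close> that by (induction n) auto
      then show "(f ^^ n) x = x \<longleftrightarrow> 1 dvd n" by simp
    qed
    then have "cycle_type f A = replicate_mset (card A) 1" using permon.ct_uniform[OF pm] by simp
    moreover have "replicate_mset (p ^ 2) (1::nat) = replicate_mset (p ^ 2 - 1) 1 + {#1#}"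
      using p0 by (cases "p ^ 2") auto
    ultimately show ?a using assms(3) by (intro exI[of _ 1]) simp
  qed
  ultimately consider ?a | ?b | ?c by blast
  then show ?L
  proof cases
    case 1
    then obtain d where "d > 0" "d dvd p ^ 2 - 1" "cycle_type f A = replicate_mset ((p ^ 2 - 1) div d) d + {#1#}"
      by blast
    then show ?L using bwd_a[OF assms(1)] assms(2,4) by blast
  next
    case 2
    then obtain d where d: "d > 0" "d dvd p - 1" "cycle_type f A = replicate_mset ((p - 1) div d) (p * d)
                       + replicate_mset ((p - 1) div d) d + {#1#}" by blast
    obtain \<sigma> where s: "\<sigma> \<in> hom (Zp2 p) (Zp2 p)" "permon \<sigma> (carrier (Zp2 p))"
      "cycle_type \<sigma> (carrier (Zp2 p)) = replicate_mset ((p - 1) div d) (p * d)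
                       + replicate_mset ((p - 1) div d) d + {#1#}"
      using bwd_b[OF assms(1) d(1,2)] by blast
    show ?L using realize[OF Zp2_cg[OF p0] s(1,2) _ assms(4,2)] s(3) d(3) by simp
  next
    case 3
    then obtain d1 d2 where d: "d1 > 0" "d2 > 0" "d1 dvd p - 1" "d2 dvd p - 1"
      "cycle_type f A = replicate_mset ((p - 1) ^ 2 div lcm d1 d2) (lcm d1 d2)
                       + replicate_mset ((p - 1) div d1) d1
                       + replicate_mset ((p - 1) div d2) d2 + {#1#}" by blast
    obtain \<sigma> where s: "\<sigma> \<in> hom (Zp2 p) (Zp2 p)" "permon \<sigma> (carrier (Zp2 p))"
      "cycle_type \<sigma> (carrier (Zp2 p)) = replicate_mset ((p - 1) ^ 2 div lcm d1 d2) (lcm d1 d2)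
                       + replicate_mset ((p - 1) div d1) d1
                       + replicate_mset ((p - 1) div d2) d2 + {#1#}"
      using bwd_c[OF assms(1) d(1-4)] by blast
    show ?L using realize[OF Zp2_cg[OF p0] s(1,2) _ assms(4,2)] s(3) d(5) by simp
  qed
qed

end
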